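(* Let $x=\tilde w\ell$ with $\tilde w\in\widetilde W$ satisfying $\tilde w\alpha>0$ for all $\alpha\in\Delta(L)$ and $\ell=wu$ with $w\in W_L$, $u\in\Upsilon$. Then $$B_\phi\cap x^{-1}I^-x=B_\phi\cap\ell^{-1}B_L^-\ell=\{tv\in T_\phi U_\phi:\ (t^{-1}ut)vu^{-1}\in U_L\cap w^{-1}U_L^-w\}.$$
   Context: $k$ a field, $G=\mathrm{GL}_n$; $I^-=\{g\in\mathrm{GL}_n(k[s^{-1}]):g|_{s^{-1}=0}\text{ lower triangular}\}$, $I\subset\mathrm{GL}_n(k[[s]])$ preimage of upper triangular matrices; affine roots $\alpha_{ij}+r$ with root subgroups $\{1+as^rE_{ij}\}$, positive if contained in $I$; $\widetilde W$ = monomial matrices $w\,\mathrm{diag}(s^{\lambda_i})$. Fix $1\le d\le n$, $m=n-d$. $L\subset\mathrm{GL}_n(k((s)))$ is generated by the diagonal torus $T(k)$ and $\{1+as^{(i-j)/d}E_{ij}\}$ for $i\equiv j\bmod d$, $i\neq j$; $L\simeq G_0=\{g\in\mathrm{GL}_n(k):g_{ij}=0\text{ unless }i\equiv j\bmod d\}$ via $s^{(i-j)/d}E_{ij}\mapsto E_{ij}$. $\Delta(L)=\{\alpha_{i,i+d}-1\}$; $W_L$ the Weyl group of $L$ (its permutation matrices); $U_L$ (resp. $U_L^-$) generated by the root subgroups of $L$ with $i<j$ (resp. $i>j$); $B_L^-=T(k)U_L^-$. $B_\phi\subset L$ corresponds to $\{\mathrm{diag}(\mathrm{Id}_d,b):b\in\mathrm{GL}_m\text{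 upper triangular}\}\cap G_0$, with torus $T_\phi$ and unipotent radical $U_\phi$. $\Upsilon=\prod U_\alpha$ over the root subgroups of $L$ with finite part $\alpha_{ij}$, $1\le i\le d$, $i+d\le j\le n$, $j\equiv i\bmod d$. *)

theory Defs
  imports "Jordan_Normal_Form.Matrix" "HOL-Computational_Algebra.Formal_Laurent_Series"
    "HOL-Combinatorics.Permutations"
begin

text \<open>Conventions: k is a field of type 'a; matrices are n x n matrices over the
  Laurent series field k((s)) = 'a fls; indices are 0-based (paper index i corresponds to i-1).\<close>

definition sp :: "int \<Rightarrow> 'a::field fls" where
  "sp r = fls_X_intpow r"

definition minv :: "nat \<Rightarrow> 'a::field fls mat \<Rightarrow> 'a fls mat" where
  "minv n A = (SOME B. B \<in> carrier_mat n n \<and> A * B = 1\<^sub>m n \<and> B * A = 1\<^sub>m n)"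

definition conj_set :: "nat \<Rightarrow> 'a::field fls mat \<Rightarrow> 'a fls mat set \<Rightarrow> 'a fls mat set" where
  "conj_set n x S = {x * g * minv n x | g. g \<in> S}"

text \<open>Root subgroup of the affine root alpha_ij + r : {1 + a s^r E_ij}.\<close>
definition root_elem :: "nat \<Rightarrow> nat \<Rightarrow> nat \<Rightarrow> int \<Rightarrow> 'a::field \<Rightarrow> 'a fls mat" where
  "root_elem n i j r a = mat n n (\<lambda>(p,q). (if p = q then 1 else 0)
      + (if p = i \<and> q = j then fls_const a * sp r else 0))"

definition root_sub :: "nat \<Rightarrow> nat \<Rightarrow> nat \<Rightarrow> int \<Rightarrow> 'a::field fls mat set" where
  "root_sub n i j r = {root_elem n i j r a | a. True}"

definition in_kinv :: "'a::field fls \<Rightarrow> bool" where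
  "in_kinv f \<longleftrightarrow> (\<forall>m>0. fls_nth f m = 0)"

definition in_kpow :: "'a::field fls \<Rightarrow> bool" where
  "in_kpow f \<longleftrightarrow> (\<forall>m<0. fls_nth f m = 0)"

definition GL_R :: "nat \<Rightarrow> ('a::field fls \<Rightarrow> bool) \<Rightarrow> 'a fls mat set" where
  "GL_R n R = {g \<in> carrier_mat n n. (\<forall>i<n. \<forall>j<n. R (g $$ (i,j))) \<and>
     (\<exists>h \<in> carrier_mat n n. (\<forall>i<n. \<forall>j<n. R (h $$ (i,j))) \<and> g * h = 1\<^sub>m n \<and> h * g = 1\<^sub>m n)}"

text \<open>I^-: elements of GL_n(k[s^{-1}]) whose value at s^{-1}=0 (constant term) is lower triangular.\<close>
definition Iminus :: "nat \<Rightarrow> 'a::field fls mat set" where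
  "Iminus n = {g \<in> GL_R n in_kinv. \<forall>i<n. \<forall>j<n. i < j \<longrightarrow> fls_nth (g $$ (i,j)) 0 = 0}"

text \<open>I: preimage in GL_n(k[[s]]) of the upper triangular matrices under s = 0.\<close>
definition Iwah :: "nat \<Rightarrow> 'a::field fls mat set" where
  "Iwah n = {g \<in> GL_R n in_kpow. \<forall>i<n. \<forall>j<n. j < i \<longrightarrow> fls_nth (g $$ (i,j)) 0 = 0}"

definition perm_mat :: "nat \<Rightarrow> (nat \<Rightarrow> nat) \<Rightarrow> 'b::{zero,one} mat" where
  "perm_mat n \<sigma> = mat n n (\<lambda>(i,j). if i = \<sigma> j then 1 else 0)"

definition diag_s :: "nat \<Rightarrow> (nat \<Rightarrow> int) \<Rightarrow> 'a::field fls mat" where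
  "diag_s n lam = mat n n (\<lambda>(i,j). if i = j then sp (lam i) else 0)"

definition Wtil :: "nat \<Rightarrow> 'a::field fls mat set" where
  "Wtil n = {perm_mat n \<sigma> * diag_s n lam | \<sigma> lam. \<sigma> permutes {..<n}}"

text \<open>An affine root alpha is positive if its root subgroup lies in I; w~ alpha is the
  affine root whose root subgroup is w~ U_alpha w~^{-1}.\<close>
definition aff_pos_after :: "nat \<Rightarrow> 'a::field fls mat \<Rightarrow> nat \<Rightarrow> nat \<Rightarrow> int \<Rightarrow> bool" where
  "aff_pos_after n wt i j r \<longleftrightarrow> conj_set n wt (root_sub n i j r) \<subseteq> Iwah n"

definition G0 :: "nat \<Rightarrow> nat \<Rightarrow> 'a::field mat set" where
  "G0 n d = {c \<in> carrier_mat n n. invertible_mat c \<and>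
      (\<forall>i<n. \<forall>j<n. i mod d \<noteq> j mod d \<longrightarrow> c $$ (i,j) = 0)}"

definition iota :: "nat \<Rightarrow> nat \<Rightarrow> 'a::field mat \<Rightarrow> 'a fls mat" where
  "iota n d c = mat n n (\<lambda>(i,j). if i mod d = j mod d
      then fls_const (c $$ (i,j)) * sp ((int i - int j) div int d) else 0)"

definition Lgrp :: "nat \<Rightarrow> nat \<Rightarrow> 'a::field fls mat set" where
  "Lgrp n d = iota n d ` G0 n d"

definition Tk :: "nat \<Rightarrow> 'a::field fls mat set" where
  "Tk n = {mat n n (\<lambda>(i,j). if i = j then fls_const (t i) else 0) | t. \<forall>i<n. t i \<noteq> 0}"

definition UL :: "nat \<Rightarrow> nat \<Rightarrow> 'a::field fls mat set" where
  "UL n d = iota n d ` {c \<in> G0 n d. \<forall>i<n. \<forall>j<n. (i = j \<longrightarrow> c $$ (i,j) = 1) \<and> (j < i \<longrightarrow> c $$ (i,j) = 0)}"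

definition ULm :: "nat \<Rightarrow> nat \<Rightarrow> 'a::field fls mat set" where
  "ULm n d = iota n d ` {c \<in> G0 n d. \<forall>i<n. \<forall>j<n. (i = j \<longrightarrow> c $$ (i,j) = 1) \<and> (i < j \<longrightarrow> c $$ (i,j) = 0)}"

definition BLm :: "nat \<Rightarrow> nat \<Rightarrow> 'a::field fls mat set" where
  "BLm n d = {t * v | t v. t \<in> Tk n \<and> v \<in> ULm n d}"

definition WL :: "nat \<Rightarrow> nat \<Rightarrow> 'a::field fls mat set" where
  "WL n d = iota n d ` ({perm_mat n \<sigma> | \<sigma>. \<sigma> permutes {..<n}} \<inter> G0 n d)"

text \<open>B_phi corresponds to {diag(Id_d, b) : b upper triangular in GL_m} \<inter> G_0.\<close>
definition Bphi0 :: "nat \<Rightarrow> nat \<Rightarrow> 'a::field mat set" where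
  "Bphi0 n d = {c \<in> G0 n d. \<forall>i<n. \<forall>j<n.
      ((i < d \<or> j < d) \<longrightarrow> c $$ (i,j) = (if i = j then 1 else 0)) \<and> (j < i \<longrightarrow> c $$ (i,j) = 0)}"

definition Bphi :: "nat \<Rightarrow> nat \<Rightarrow> 'a::field fls mat set" where
  "Bphi n d = iota n d ` Bphi0 n d"

definition Tphi :: "nat \<Rightarrow> nat \<Rightarrow> 'a::field fls mat set" where
  "Tphi n d = iota n d ` {c \<in> Bphi0 n d. \<forall>i<n. \<forall>j<n. i \<noteq> j \<longrightarrow> c $$ (i,j) = 0}"

definition Uphi :: "nat \<Rightarrow> nat \<Rightarrow> 'a::field fls mat set" where
  "Uphi n d = iota n d ` {c \<in> Bphi0 n d. \<forall>i<n. c $$ (i,i) = 1}"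

text \<open>Upsilon: product of the root subgroups of L with finite part alpha_ij,
  1 \<le> i \<le> d, i+d \<le> j \<le> n, j = i mod d (0-based: i < d). These subgroups pairwise
  commute and multiply to the set below.\<close>
definition Ups :: "nat \<Rightarrow> nat \<Rightarrow> 'a::field fls mat set" where
  "Ups n d = iota n d ` {c \<in> carrier_mat n n. \<forall>i<n. \<forall>j<n.
      (i = j \<longrightarrow> c $$ (i,j) = 1) \<and>
      (i \<noteq> j \<and> c $$ (i,j) \<noteq> 0 \<longrightarrow> i < d \<and> i + d \<le> j \<and> i mod d = j mod d)}"

end

theory Submission
  imports Defs "Jordan_Normal_Form.Determinant"
begin

lemma sp_mult: "(sp a :: 'a::field fls) * sp b = sp (a + b)"
  unfolding sp_def by (simp add: fls_X_intpow_times_fls_X_intpow)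

lemma sp_0[simp]: "(sp 0 :: 'a::field fls) = 1"
  unfolding sp_def by simp

lemma nth_const_sp: "fls_nth (fls_const c * (sp r :: 'a::field fls)) m = (if m = r then c else 0)"
  unfolding sp_def by (simp add: fls_X_intpow_times_conv_shift)

lemma asn: "A \<in> carrier_mat n n \<Longrightarrow> B \<in> carrier_mat n n \<Longrightarrow> C \<in> carrier_mat n n \<Longrightarrow> A * B * C = A * (B * C)"
  by simp
lemma mcn: "A \<in> carrier_mat n n \<Longrightarrow> B \<in> carrier_mat n n \<Longrightarrow> A * B \<in> carrier_mat n n"
  by simp

lemma nth_sp: "fls_nth (sp r :: 'a::field fls) m = (if m = r then 1 else 0)"
  unfolding sp_def by simp

lemma minv_eq:
  assumes "A \<in> carrier_mat n n" "B \<in> carrier_mat n n" "A * B = 1\<^sub>m n" "B * A = 1\<^sub>m n"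
  shows "minv n A = B"
proof -
  have ex: "\<exists>B. B \<in> carrier_mat n n \<and> A * B = 1\<^sub>m n \<and> B * A = 1\<^sub>m n" using assms by blast
  let ?C = "minv n A"
  have C: "?C \<in> carrier_mat n n" "A * ?C = 1\<^sub>m n" "?C * A = 1\<^sub>m n"
    using someI_ex[OF ex] unfolding minv_def by auto
  have "?C = ?C * (A * B)" using C assms by simp
  also have "\<dots> = (?C * A) * B" using C(1) assms(1,2) by simp
  also have "\<dots> = B" using C assms by simp
  finally show ?thesis .
qed

lemma conj_mem:
  assumes A: "A \<in> carrier_mat n n" and B: "B \<in> carrier_mat n n" and AB: "A * B = 1\<^sub>m n" "B * A = 1\<^sub>m n"
    and S: "S \<subseteq> carrier_mat n n" and b: "b \<in> carrier_mat n n"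
  shows "b \<in> conj_set n (minv n A) S \<longleftrightarrow> A * b * B \<in> S"
proof -
  have mA: "minv n A = B" by (rule minv_eq[OF A B AB])
  have mB: "minv n B = A" by (rule minv_eq[OF B A AB(2) AB(1)])
  show ?thesis
  proof
    assume "b \<in> conj_set n (minv n A) S"
    then obtain g where g: "g \<in> S" "b = B * g * A" unfolding conj_set_def mA mB by auto
    have gc: "g \<in> carrier_mat n n" using g S by auto
    have "A * b * B = (A * B) * g * (A * B)" unfolding g(2) using gc A B by (simp add: asn[of _ n] mcn[of _ n])
    also have "\<dots> = g" using AB gc by simp
    finally show "A * b * B \<in> S" using g by simp
  next
    assume h: "A * b * B \<in> S"
    have "B * (A * b * B) * A = (B * A) * b * (B * A)" using b A B by (simp add: asn[of _ n] mcn[of _ n])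
    also have "\<dots> = b" using AB b by simp
    finally show "b \<in> conj_set n (minv n A) S" unfolding conj_set_def mA mB using h by (metis (mono_tags, lifting) mem_Collect_eq)
  qed
qed

definition blk :: "nat \<Rightarrow> nat \<Rightarrow> 'b::zero mat \<Rightarrow> bool" where
  "blk n d c \<longleftrightarrow> (\<forall>i<n. \<forall>j<n. i mod d \<noteq> j mod d \<longrightarrow> c $$ (i,j) = 0)"

lemma fls_const_sum: "fls_const (\<Sum>k\<in>A. f k) = (\<Sum>k\<in>A. fls_const (f k))"
  by (induction A rule: infinite_finite_induct) (auto simp: fls_plus_const[symmetric])

lemma mult_entry:
  assumes "A \<in> carrier_mat n n" "B \<in> carrier_mat n n" "i < n" "j < n"
  shows "(A * B) $$ (i,j) = (\<Sum>k<n. A $$ (i,k) * B $$ (k,j))"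
  using assms by (auto simp: scalar_prod_def atLeast0LessThan intro!: sum.cong)

lemma iota_entry:
  "i < n \<Longrightarrow> j < n \<Longrightarrow> iota n d c $$ (i,j) = (if i mod d = j mod d
      then fls_const (c $$ (i,j)) * sp ((int i - int j) div int d) else 0)"
  unfolding iota_def by simp

lemma iota_dims[simp]: "dim_row (iota n d c) = n" "dim_col (iota n d c) = n"
  unfolding iota_def by simp_all

lemma iota_carrier[simp]: "iota n d c \<in> carrier_mat n n"
  unfolding iota_def by simp

lemma div_diff:
  assumes "i mod d = j mod d"
  shows "(int i - int j) div int d = int (i div d) - int (j div d)"
proof (cases "d = 0")
  case True then show ?thesis by simp
next
  case False
  have "int i - int j = int d * (int (i div d) - int (j div d))"
    using assms div_mult_mod_eq[of i d] div_mult_mod_eq[of j d]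
  proof -
    have a: "int i = int d * int (i div d) + int (i mod d)"
      by (metis div_mult_mod_eq of_nat_add of_nat_mult mult.commute)
    have b: "int j = int d * int (j div d) + int (j mod d)"
      by (metis div_mult_mod_eq of_nat_add of_nat_mult mult.commute)
    show ?thesis using a b assms by (simp add: algebra_simps)
  qed
  then show ?thesis using False by simp
qed

lemma iota_mult:
  assumes c: "c \<in> carrier_mat n n" and c': "c' \<in> carrier_mat n n" and b: "blk n d c"
  shows "iota n d c * iota n d c' = iota n d (c * c')"
proof (rule eq_matI)
  fix i j assume i: "i < dim_row (iota n d (c * c'))" and j: "j < dim_col (iota n d (c * c'))"
  then have i: "i < n" and j: "j < n" by (auto simp: iota_def)
  have "(iota n d c * iota n d c') $$ (i,j) = (\<Sum>k<n. iota n d c $$ (i,k) * iota n d c' $$ (k,j))"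
    by (rule mult_entry[OF iota_carrier iota_carrier i j])
  also have "\<dots> = (\<Sum>k<n. if i mod d = j mod d then fls_const (c $$ (i,k) * c' $$ (k,j)) * sp ((int i - int j) div int d) else 0)"
  proof (rule sum.cong[OF refl])
    fix k assume k: "k \<in> {..<n}"
    show "iota n d c $$ (i,k) * iota n d c' $$ (k,j) = (if i mod d = j mod d then fls_const (c $$ (i,k) * c' $$ (k,j)) * sp ((int i - int j) div int d) else 0)"
    proof (cases "i mod d = k mod d")
      case True
      then show ?thesis using i j k
        by (auto simp: iota_entry div_diff sp_mult algebra_simps simp flip: fls_const_mult_const)
    next
      case False
      then have "c $$ (i,k) = 0" using b i k unfolding blk_def by auto
      then show ?thesis using False i j k by (auto simp: iota_entry)
    qed
  qed
  also have "\<dots> = iota n d (c * c') $$ (i,j)"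
    using i j c c' by (auto simp: iota_entry mult_entry[OF c c' i j] fls_const_sum sum_distrib_right)
  finally show "(iota n d c * iota n d c') $$ (i,j) = iota n d (c * c') $$ (i,j)" .
qed (auto simp: iota_def)

lemma iota_one: "iota n d (1\<^sub>m n) = (1\<^sub>m n :: 'a::field fls mat)"
  by (rule eq_matI) (auto simp: iota_def)

lemma blk_mult:
  assumes c: "c \<in> carrier_mat n n" and c': "c' \<in> carrier_mat n n" and b: "blk n d c" and b': "blk n d c'"
  shows "blk n d (c * c')"
  unfolding blk_def
proof (intro allI impI)
  fix i j assume i: "i < n" and j: "j < n" and ij: "i mod d \<noteq> j mod d"
  have "(\<Sum>k<n. c $$ (i,k) * c' $$ (k,j)) = 0"
  proof (rule sum.neutral, intro ballI)
    fix k assume k: "k \<in> {..<n}"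
    show "c $$ (i,k) * c' $$ (k,j) = 0"
    proof (cases "i mod d = k mod d")
      case True then have "c' $$ (k,j) = 0" using b' k j ij unfolding blk_def by auto
      then show ?thesis by simp
    next
      case False then have "c $$ (i,k) = 0" using b k i unfolding blk_def by auto
      then show ?thesis by simp
    qed
  qed
  then show "(c * c') $$ (i,j) = 0" using mult_entry[OF c c' i j] by simp
qed

lemma supp_inv:
  fixes A B :: "'b::field mat" and \<mu> :: "nat \<Rightarrow> nat"
  assumes A: "A \<in> carrier_mat n n" and B: "B \<in> carrier_mat n n" and AB: "A * B = 1\<^sub>m n"
    and sA: "\<And>i k. i < n \<Longrightarrow> k < n \<Longrightarrow> A $$ (i,k) \<noteq> 0 \<Longrightarrow> R i k"
    and tr: "\<And>i k j. R i k \<Longrightarrow> R k j \<Longrightarrow> R i j"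
    and rf: "\<And>i. R i i"
    and mu: "\<And>i k. i < n \<Longrightarrow> k < n \<Longrightarrow> R i k \<Longrightarrow> i \<noteq> k \<Longrightarrow> \<mu> k < \<mu> i"
    and dg: "\<And>i. i < n \<Longrightarrow> A $$ (i,i) \<noteq> 0"
    and j: "j < n"
  shows "i < n \<Longrightarrow> \<not> R i j \<Longrightarrow> B $$ (i,j) = 0"
proof (induction "\<mu> i" arbitrary: i rule: less_induct)
  case less
  have ij: "i \<noteq> j" using less.prems rf by auto
  have "(A * B) $$ (i,j) = 0" using AB less.prems j ij by simp
  then have s: "(\<Sum>k<n. A $$ (i,k) * B $$ (k,j)) = 0" using mult_entry[OF A B less.prems(1) j] by simp
  have "(\<Sum>k<n. A $$ (i,k) * B $$ (k,j)) = A $$ (i,i) * B $$ (i,j) + (\<Sum>k\<in>{..<n}-{i}. A $$ (i,k) * B $$ (k,j))"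
    by (rule sum.remove) (use less.prems in auto)
  also have "(\<Sum>k\<in>{..<n}-{i}. A $$ (i,k) * B $$ (k,j)) = 0"
  proof (rule sum.neutral, intro ballI)
    fix k assume k: "k \<in> {..<n}-{i}"
    show "A $$ (i,k) * B $$ (k,j) = 0"
    proof (cases "A $$ (i,k) = 0")
      case False
      then have R: "R i k" using sA less.prems k by auto
      then have "\<not> R k j" using tr less.prems by blast
      moreover have "\<mu> k < \<mu> i" using mu[OF less.prems(1) _ R] k by auto
      ultimately have "B $$ (k,j) = 0" using less.hyps k by auto
      then show ?thesis by simp
    qed simp
  qed
  finally have "A $$ (i,i) * B $$ (i,j) = 0" using s by simp
  then show ?case using dg less.prems by simp
qed

lemma inv_left_right:
  fixes A B :: "'b::field mat"
  assumes "A \<in> carrier_mat n n" "B \<in> carrier_mat n n" "A * B = 1\<^sub>m n"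
  shows "det A \<noteq> 0"
proof -
  have "det A * det B = 1" using det_mult[OF assms(1,2)] assms(3) by simp
  then show ?thesis by auto
qed

lemma lower_diag_nz:
  fixes A B :: "'b::field mat"
  assumes A: "A \<in> carrier_mat n n" and B: "B \<in> carrier_mat n n" and AB: "A * B = 1\<^sub>m n"
    and lo: "\<And>i j. i < j \<Longrightarrow> j < n \<Longrightarrow> A $$ (i,j) = 0" and i: "i < n"
  shows "A $$ (i,i) \<noteq> 0"
proof -
  have "det A = (\<Prod>i = 0 ..< n. A $$ (i,i))"
    using det_lower_triangular[OF lo A] A by (simp add: prod_list_diag_prod)
  then show ?thesis using inv_left_right[OF A B AB] i by auto
qed

lemma upper_diag_nz:
  fixes A B :: "'b::field mat"
  assumes A: "A \<in> carrier_mat n n" and B: "B \<in> carrier_mat n n" and AB: "A * B = 1\<^sub>m n"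
    and up: "\<And>i j. j < i \<Longrightarrow> i < n \<Longrightarrow> A $$ (i,j) = 0" and i: "i < n"
  shows "A $$ (i,i) \<noteq> 0"
proof -
  have ut: "upper_triangular A" unfolding upper_triangular_def using up A by auto
  have "det A = (\<Prod>i = 0 ..< n. A $$ (i,i))"
    using det_upper_triangular[OF ut A] A by (simp add: prod_list_diag_prod)
  then show ?thesis using inv_left_right[OF A B AB] i by auto
qed


lemma blk_one: "blk n d (1\<^sub>m n)" unfolding blk_def by auto

lemma iota_inj:
  assumes "c \<in> carrier_mat n n" "c' \<in> carrier_mat n n" "blk n d c" "blk n d c'"
    and "iota n d c = (iota n d c' :: 'a::field fls mat)"
  shows "c = c'"
proof (rule eq_matI)
  fix i j assume "i < dim_row c'" "j < dim_col c'"
  then have i: "i < n" and j: "j < n" using assms by auto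
  show "c $$ (i,j) = c' $$ (i,j)"
  proof (cases "i mod d = j mod d")
    case True
    have "fls_nth (iota n d c $$ (i,j)) ((int i - int j) div int d) = fls_nth (iota n d c' $$ (i,j)) ((int i - int j) div int d)"
      using assms(5) by simp
    then show ?thesis using True i j by (simp add: iota_entry nth_const_sp del: fls_mult_const_nth)
  next
    case False then show ?thesis using assms i j unfolding blk_def by auto
  qed
qed (use assms in auto)

lemma perm_left:
  fixes A :: "'b::comm_ring_1 mat"
  assumes p: "\<sigma> permutes {..<n}" and A: "A \<in> carrier_mat n n"
  shows "perm_mat n \<sigma> * A = mat n n (\<lambda>(i,j). A $$ (inv_into UNIV \<sigma> i, j))"
proof (rule eq_matI)
  fix i j assume "i < dim_row (mat n n (\<lambda>(i,j). A $$ (inv_into UNIV \<sigma> i, j)))" "j < dim_col (mat n n (\<lambda>(i,j). A $$ (inv_into UNIV \<sigma> i, j)))"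
  then have i: "i < n" and j: "j < n" by auto
  have P: "perm_mat n \<sigma> \<in> carrier_mat n n" unfolding perm_mat_def by simp
  have k0: "inv_into UNIV \<sigma> i < n" using p i by (meson lessThan_iff permutes_in_image permutes_inv)
  have s0: "\<sigma> (inv_into UNIV \<sigma> i) = i" using p by (meson permutes_inverses(1))
  have "(perm_mat n \<sigma> * A) $$ (i,j) = (\<Sum>k<n. perm_mat n \<sigma> $$ (i,k) * A $$ (k,j))"
    by (rule mult_entry[OF P A i j])
  also have "\<dots> = perm_mat n \<sigma> $$ (i,inv_into UNIV \<sigma> i) * A $$ (inv_into UNIV \<sigma> i,j) + (\<Sum>k\<in>{..<n}-{inv_into UNIV \<sigma> i}. perm_mat n \<sigma> $$ (i,k) * A $$ (k,j))"
    by (rule sum.remove) (use k0 in auto)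
  also have "(\<Sum>k\<in>{..<n}-{inv_into UNIV \<sigma> i}. perm_mat n \<sigma> $$ (i,k) * A $$ (k,j)) = 0"
  proof (rule sum.neutral, intro ballI)
    fix k assume k: "k \<in> {..<n}-{inv_into UNIV \<sigma> i}"
    then have "i \<noteq> \<sigma> k" using p by (metis DiffD2 insertI1 permutes_inverses(2))
    then show "perm_mat n \<sigma> $$ (i,k) * A $$ (k,j) = 0" using k i unfolding perm_mat_def by auto
  qed
  finally show "(perm_mat n \<sigma> * A) $$ (i,j) = mat n n (\<lambda>(i,j). A $$ (inv_into UNIV \<sigma> i, j)) $$ (i,j)"
    using i j k0 s0 unfolding perm_mat_def by simp
qed (use assms in \<open>auto simp: perm_mat_def\<close>)

lemma perm_right:
  fixes A :: "'b::comm_ring_1 mat"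
  assumes p: "\<sigma> permutes {..<n}" and A: "A \<in> carrier_mat n n"
  shows "A * perm_mat n \<sigma> = mat n n (\<lambda>(i,j). A $$ (i, \<sigma> j))"
proof (rule eq_matI)
  fix i j assume "i < dim_row (mat n n (\<lambda>(i,j). A $$ (i, \<sigma> j)))" "j < dim_col (mat n n (\<lambda>(i,j). A $$ (i, \<sigma> j)))"
  then have i: "i < n" and j: "j < n" by auto
  have P: "perm_mat n \<sigma> \<in> carrier_mat n n" unfolding perm_mat_def by simp
  have k0: "\<sigma> j < n" using p j by (meson lessThan_iff permutes_in_image)
  have "(A * perm_mat n \<sigma>) $$ (i,j) = (\<Sum>k<n. A $$ (i,k) * perm_mat n \<sigma> $$ (k,j))"
    by (rule mult_entry[OF A P i j])
  also have "\<dots> = A $$ (i,\<sigma> j) * perm_mat n \<sigma> $$ (\<sigma> j,j) + (\<Sum>k\<in>{..<n}-{\<sigma> j}. A $$ (i,k) * perm_mat n \<sigma> $$ (k,j))"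
    by (rule sum.remove) (use k0 in auto)
  also have "(\<Sum>k\<in>{..<n}-{\<sigma> j}. A $$ (i,k) * perm_mat n \<sigma> $$ (k,j)) = 0"
  proof (rule sum.neutral, intro ballI)
    fix k assume k: "k \<in> {..<n}-{\<sigma> j}"
    then show "A $$ (i,k) * perm_mat n \<sigma> $$ (k,j) = 0" using k j unfolding perm_mat_def by auto
  qed
  finally show "(A * perm_mat n \<sigma>) $$ (i,j) = mat n n (\<lambda>(i,j). A $$ (i, \<sigma> j)) $$ (i,j)"
    using i j k0 unfolding perm_mat_def by simp
qed (use assms in \<open>auto simp: perm_mat_def\<close>)

definition gdiag :: "nat \<Rightarrow> (nat \<Rightarrow> 'b::zero) \<Rightarrow> 'b mat" where
  "gdiag n f = mat n n (\<lambda>(i,j). if i = j then f i else 0)"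

lemma gdiag_carrier[simp]: "gdiag n f \<in> carrier_mat n n" unfolding gdiag_def by simp

lemma gdiag_left:
  fixes A :: "'b::comm_ring_1 mat"
  assumes A: "A \<in> carrier_mat n n"
  shows "gdiag n f * A = mat n n (\<lambda>(i,j). f i * A $$ (i, j))"
proof (rule eq_matI)
  fix i j assume "i < dim_row (mat n n (\<lambda>(i,j). f i * A $$ (i, j)))" "j < dim_col (mat n n (\<lambda>(i,j). f i * A $$ (i, j)))"
  then have i: "i < n" and j: "j < n" by auto
  have "(gdiag n f * A) $$ (i,j) = (\<Sum>k<n. gdiag n f $$ (i,k) * A $$ (k,j))"
    by (rule mult_entry[OF gdiag_carrier A i j])
  also have "\<dots> = gdiag n f $$ (i,i) * A $$ (i,j) + (\<Sum>k\<in>{..<n}-{i}. gdiag n f $$ (i,k) * A $$ (k,j))"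
    by (rule sum.remove) (use i in auto)
  also have "(\<Sum>k\<in>{..<n}-{i}. gdiag n f $$ (i,k) * A $$ (k,j)) = 0"
    by (rule sum.neutral) (use i j in \<open>auto simp: gdiag_def\<close>)
  finally show "(gdiag n f * A) $$ (i,j) = mat n n (\<lambda>(i,j). f i * A $$ (i, j)) $$ (i,j)"
    using i j unfolding gdiag_def by simp
qed (use assms in \<open>auto simp: gdiag_def\<close>)

lemma gdiag_right:
  fixes A :: "'b::comm_ring_1 mat"
  assumes A: "A \<in> carrier_mat n n"
  shows "A * gdiag n f = mat n n (\<lambda>(i,j). A $$ (i, j) * f j)"
proof (rule eq_matI)
  fix i j assume "i < dim_row (mat n n (\<lambda>(i,j). A $$ (i, j) * f j))" "j < dim_col (mat n n (\<lambda>(i,j). A $$ (i, j) * f j))"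
  then have i: "i < n" and j: "j < n" by auto
  have "(A * gdiag n f) $$ (i,j) = (\<Sum>k<n. A $$ (i,k) * gdiag n f $$ (k,j))"
    by (rule mult_entry[OF A gdiag_carrier i j])
  also have "\<dots> = A $$ (i,j) * gdiag n f $$ (j,j) + (\<Sum>k\<in>{..<n}-{j}. A $$ (i,k) * gdiag n f $$ (k,j))"
    by (rule sum.remove) (use j in auto)
  also have "(\<Sum>k\<in>{..<n}-{j}. A $$ (i,k) * gdiag n f $$ (k,j)) = 0"
    by (rule sum.neutral) (use i j in \<open>auto simp: gdiag_def\<close>)
  finally show "(A * gdiag n f) $$ (i,j) = mat n n (\<lambda>(i,j). A $$ (i, j) * f j) $$ (i,j)"
    using i j unfolding gdiag_def by simp
qed (use assms in \<open>auto simp: gdiag_def\<close>)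

lemma diag_s_gdiag: "diag_s n lam = gdiag n (\<lambda>i. sp (lam i))"
  unfolding diag_s_def gdiag_def by simp

lemma perm_carrier[simp]: "perm_mat n \<sigma> \<in> carrier_mat n n" unfolding perm_mat_def by simp
lemma diag_s_carrier[simp]: "diag_s n lam \<in> carrier_mat n n" unfolding diag_s_def by simp

lemma perm_lt: "\<sigma> permutes {..<n} \<Longrightarrow> j < n \<Longrightarrow> \<sigma> j < n"
  by (meson lessThan_iff permutes_in_image)
lemma perm_inv_lt: "\<sigma> permutes {..<n} \<Longrightarrow> j < n \<Longrightarrow> inv_into UNIV \<sigma> j < n"
  by (meson lessThan_iff permutes_in_image permutes_inv)
lemma one_left_n: "(A :: 'b::semiring_1 mat) \<in> carrier_mat n n \<Longrightarrow> 1\<^sub>m n * A = A" by simp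
lemma one_right_n: "(A :: 'b::semiring_1 mat) \<in> carrier_mat n n \<Longrightarrow> A * 1\<^sub>m n = A" by simp

lemma perm_perm_inv:
  assumes p: "\<sigma> permutes {..<n}"
  shows "perm_mat n \<sigma> * perm_mat n (inv_into UNIV \<sigma>) = (1\<^sub>m n :: 'b::comm_ring_1 mat)"
    "perm_mat n (inv_into UNIV \<sigma>) * perm_mat n \<sigma> = (1\<^sub>m n :: 'b::comm_ring_1 mat)"
proof -
  have pi: "inv_into UNIV \<sigma> permutes {..<n}" using p by (rule permutes_inv)
  show "perm_mat n \<sigma> * perm_mat n (inv_into UNIV \<sigma>) = (1\<^sub>m n :: 'b::comm_ring_1 mat)"
    unfolding perm_right[OF pi perm_carrier]
    by (rule eq_matI) (auto simp: perm_mat_def permutes_inverses(1)[OF p] perm_inv_lt[OF p])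
  show "perm_mat n (inv_into UNIV \<sigma>) * perm_mat n \<sigma> = (1\<^sub>m n :: 'b::comm_ring_1 mat)"
    unfolding perm_right[OF p perm_carrier]
    by (rule eq_matI) (auto simp: perm_mat_def permutes_inverses(2)[OF p] perm_lt[OF p])
qed

lemma diag_s_inv: "diag_s n lam * diag_s n (\<lambda>i. - lam i) = (1\<^sub>m n :: 'a::field fls mat)"
  unfolding diag_s_gdiag gdiag_left[OF gdiag_carrier]
  by (rule eq_matI) (auto simp: gdiag_def sp_mult)

lemma wt_inv:
  fixes lam :: "nat \<Rightarrow> int"
  assumes p: "\<sigma> permutes {..<n}"
  defines "W \<equiv> perm_mat n \<sigma> * diag_s n lam" and "Wi \<equiv> diag_s n (\<lambda>i. - lam i) * perm_mat n (inv_into UNIV \<sigma>)"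
  shows "W * Wi = (1\<^sub>m n :: 'a::field fls mat)" "Wi * W = 1\<^sub>m n"
    "W \<in> carrier_mat n n" "Wi \<in> carrier_mat n n"
proof -
  let ?P = "perm_mat n \<sigma> :: 'a fls mat" and ?Q = "perm_mat n (inv_into UNIV \<sigma>) :: 'a fls mat"
  have "W * Wi = ?P * ((diag_s n lam * diag_s n (\<lambda>i. - lam i)) * ?Q)"
    unfolding W_def Wi_def by (simp add: asn[of _ n] mcn[of _ n])
  also have "\<dots> = 1\<^sub>m n" using perm_perm_inv[OF p] by (simp add: diag_s_inv one_left_n[of _ n])
  finally show "W * Wi = 1\<^sub>m n" .
  have "Wi * W = diag_s n (\<lambda>i. - lam i) * ((?Q * ?P) * diag_s n lam)"
    unfolding W_def Wi_def by (simp add: asn[of _ n] mcn[of _ n])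
  also have "\<dots> = 1\<^sub>m n" using perm_perm_inv[OF p, where 'b="'a fls"] diag_s_inv[of n "\<lambda>i. - lam i"] by (simp add: one_left_n[of _ n])
  finally show "Wi * W = 1\<^sub>m n" .
qed (simp_all add: W_def Wi_def mcn[of _ n])

lemma wt_conj:
  assumes p: "\<sigma> permutes {..<n}" and g: "g \<in> carrier_mat n n"
  shows "perm_mat n \<sigma> * diag_s n lam * g * (diag_s n (\<lambda>i. - lam i) * perm_mat n (inv_into UNIV \<sigma>))
     = mat n n (\<lambda>(p,q). sp (lam (inv_into UNIV \<sigma> p)) * g $$ (inv_into UNIV \<sigma> p, inv_into UNIV \<sigma> q) * sp (- lam (inv_into UNIV \<sigma> q)) :: 'a::field fls)"
proof -
  have pi: "inv_into UNIV \<sigma> permutes {..<n}" using p by (rule permutes_inv)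
  let ?P = "perm_mat n \<sigma> :: 'a fls mat" and ?Q = "perm_mat n (inv_into UNIV \<sigma>) :: 'a fls mat"
  have "perm_mat n \<sigma> * diag_s n lam * g * (diag_s n (\<lambda>i. - lam i) * perm_mat n (inv_into UNIV \<sigma>))
     = ?P * (((diag_s n lam * g) * diag_s n (\<lambda>i. - lam i)) * ?Q)"
    using g by (simp add: asn[of _ n] mcn[of _ n])
  also have "diag_s n lam * g = mat n n (\<lambda>(i,j). sp (lam i) * g $$ (i,j))"
    unfolding diag_s_gdiag by (rule gdiag_left[OF g])
  also have "mat n n (\<lambda>(i,j). sp (lam i) * g $$ (i,j)) * diag_s n (\<lambda>i. - lam i)
      = mat n n (\<lambda>(i,j). sp (lam i) * g $$ (i,j) * sp (- lam j))"
    unfolding diag_s_gdiag by (subst gdiag_right) (auto intro!: eq_matI)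
  also have "mat n n (\<lambda>(i,j). sp (lam i) * g $$ (i,j) * sp (- lam j)) * ?Q
      = mat n n (\<lambda>(i,j). sp (lam i) * g $$ (i,inv_into UNIV \<sigma> j) * sp (- lam (inv_into UNIV \<sigma> j)))"
    by (subst perm_right[OF pi]) (auto intro!: eq_matI simp: perm_inv_lt[OF p])
  also have "?P * mat n n (\<lambda>(i,j). sp (lam i) * g $$ (i,inv_into UNIV \<sigma> j) * sp (- lam (inv_into UNIV \<sigma> j)))
      = mat n n (\<lambda>(p,q). sp (lam (inv_into UNIV \<sigma> p)) * g $$ (inv_into UNIV \<sigma> p, inv_into UNIV \<sigma> q) * sp (- lam (inv_into UNIV \<sigma> q)))"
    by (subst perm_left[OF p]) (auto intro!: eq_matI simp: perm_inv_lt[OF p])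
  finally show ?thesis .
qed

lemma wt_conj_entry:
  assumes p: "\<sigma> permutes {..<n}" and g: "g \<in> carrier_mat n n" and a: "a < n" and b: "b < n"
  shows "(perm_mat n \<sigma> * diag_s n lam * g * (diag_s n (\<lambda>i. - lam i) * perm_mat n (inv_into UNIV \<sigma>))) $$ (\<sigma> a, \<sigma> b)
     = sp (lam a) * g $$ (a, b) * (sp (- lam b) :: 'a::field fls)"
proof -
  have "\<sigma> a < n" "\<sigma> b < n" using perm_lt[OF p] a b by auto
  then show ?thesis unfolding wt_conj[OF p g] using permutes_inverses(2)[OF p] by simp
qed

definition ipair :: "nat \<Rightarrow> 'b::semiring_1 mat \<Rightarrow> 'b mat \<Rightarrow> bool" where
  "ipair n A B \<longleftrightarrow> A \<in> carrier_mat n n \<and> B \<in> carrier_mat n n \<and> A * B = 1\<^sub>m n \<and> B * A = 1\<^sub>m n"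

lemma det_ipair:
  fixes A :: "'b::field mat"
  assumes A: "A \<in> carrier_mat n n" and d: "det A \<noteq> 0"
  shows "\<exists>B. ipair n A B"
proof -
  have "A \<in> Units (ring_mat TYPE('b) n undefined)" by (rule det_non_zero_imp_unit[OF A d])
  then show ?thesis unfolding Units_def ring_mat_def ipair_def using A by auto
qed

lemma ipair_sym: "ipair n A B \<Longrightarrow> ipair n B A" unfolding ipair_def by auto

lemma ipair_mult:
  fixes A B C D :: "'b::semiring_1 mat"
  assumes "ipair n A B" "ipair n C D"
  shows "ipair n (A * C) (D * B)"
proof -
  have c: "A \<in> carrier_mat n n" "B \<in> carrier_mat n n" "C \<in> carrier_mat n n" "D \<in> carrier_mat n n"
    using assms unfolding ipair_def by auto
  have "A * C * (D * B) = A * ((C * D) * B)" using c by (simp add: asn[of _ n] mcn[of _ n])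
  also have "\<dots> = 1\<^sub>m n" using assms c unfolding ipair_def by (simp add: one_left_n[of _ n])
  finally have 1: "A * C * (D * B) = 1\<^sub>m n" .
  have "D * B * (A * C) = D * ((B * A) * C)" using c by (simp add: asn[of _ n] mcn[of _ n])
  also have "\<dots> = 1\<^sub>m n" using assms c unfolding ipair_def by (simp add: one_left_n[of _ n])
  finally have 2: "D * B * (A * C) = 1\<^sub>m n" .
  show ?thesis unfolding ipair_def using 1 2 c by (simp add: mcn[of _ n])
qed

lemma ipair_invertible:
  fixes A :: "'b::semiring_1 mat"
  assumes "A \<in> carrier_mat n n"
  shows "invertible_mat A \<longleftrightarrow> (\<exists>B. ipair n A B)"
proof
  assume "invertible_mat A"
  then obtain B where "A * B = 1\<^sub>m n" "B * A = 1\<^sub>m (dim_row B)"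
    unfolding invertible_mat_def inverts_mat_def using assms by auto
  moreover have "dim_row B = n" "dim_col B = n"
    using calculation assms by (metis carrier_matD index_mult_mat(2,3) index_one_mat(2,3))+
  ultimately show "\<exists>B. ipair n A B" unfolding ipair_def using assms by (auto intro!: exI[of _ B])
next
  assume "\<exists>B. ipair n A B"
  then show "invertible_mat A" unfolding ipair_def invertible_mat_def inverts_mat_def using assms by auto
qed

lemma minv_iota:
  assumes "ipair n A B" "blk n d A" "blk n d B"
  shows "minv n (iota n d A) = (iota n d B :: 'a::field fls mat)"
  using assms unfolding ipair_def
  by (intro minv_eq) (auto simp: iota_mult iota_one)

lemma up_mult:
  fixes A B :: "'b::comm_ring_1 mat"
  assumes A: "A \<in> carrier_mat n n" and B: "B \<in> carrier_mat n n"
    and uA: "\<And>i j. j < i \<Longrightarrow> i < n \<Longrightarrow> A $$ (i,j) = 0"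
    and uB: "\<And>i j. j < i \<Longrightarrow> i < n \<Longrightarrow> B $$ (i,j) = 0"
  shows "\<And>i j. j < i \<Longrightarrow> i < n \<Longrightarrow> (A * B) $$ (i,j) = 0"
    "\<And>i. i < n \<Longrightarrow> (A * B) $$ (i,i) = A $$ (i,i) * B $$ (i,i)"
proof -
  fix i j assume ji: "j < i" and i: "i < n"
  have "(\<Sum>k<n. A $$ (i,k) * B $$ (k,j)) = 0"
  proof (rule sum.neutral, intro ballI)
    fix k assume k: "k \<in> {..<n}"
    show "A $$ (i,k) * B $$ (k,j) = 0"
      using uA[of k i] uB[of j k] k ji i by (cases "k < i") auto
  qed
  then show "(A * B) $$ (i,j) = 0" using mult_entry[OF A B i] ji i by simp
next
  fix i assume i: "i < n"
  have "(\<Sum>k<n. A $$ (i,k) * B $$ (k,i)) = A $$ (i,i) * B $$ (i,i) + (\<Sum>k\<in>{..<n}-{i}. A $$ (i,k) * B $$ (k,i))"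
    by (rule sum.remove) (use i in auto)
  also have "(\<Sum>k\<in>{..<n}-{i}. A $$ (i,k) * B $$ (k,i)) = 0"
  proof (rule sum.neutral, intro ballI)
    fix k assume k: "k \<in> {..<n}-{i}"
    show "A $$ (i,k) * B $$ (k,i) = 0"
      using uA[of k i] uB[of i k] k i by (cases "k < i") auto
  qed
  finally show "(A * B) $$ (i,i) = A $$ (i,i) * B $$ (i,i)" using mult_entry[OF A B i i] by simp
qed

definition Wm :: "nat \<Rightarrow> (nat \<Rightarrow> nat) \<Rightarrow> (nat \<Rightarrow> int) \<Rightarrow> 'a::field fls mat" where
  "Wm n \<sigma> lam = perm_mat n \<sigma> * diag_s n lam"
definition Wim :: "nat \<Rightarrow> (nat \<Rightarrow> nat) \<Rightarrow> (nat \<Rightarrow> int) \<Rightarrow> 'a::field fls mat" where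
  "Wim n \<sigma> lam = diag_s n (\<lambda>i. - lam i) * perm_mat n (inv_into UNIV \<sigma>)"
definition Fd :: "nat \<Rightarrow> (nat \<Rightarrow> int) \<Rightarrow> nat \<Rightarrow> int" where
  "Fd d lam a = int (a div d) + lam a"

lemma Wm_carrier[simp]: "Wm n \<sigma> lam \<in> carrier_mat n n" unfolding Wm_def by (simp add: mcn[of _ n])
lemma Wim_carrier[simp]: "Wim n \<sigma> lam \<in> carrier_mat n n" unfolding Wim_def by (simp add: mcn[of _ n])

lemma W_ipair: "\<sigma> permutes {..<n} \<Longrightarrow> ipair n (Wm n \<sigma> lam) (Wim n \<sigma> lam :: 'a::field fls mat)"
  unfolding ipair_def Wm_def Wim_def using wt_inv by blast

lemma h_entry:
  assumes p: "\<sigma> permutes {..<n}" and a: "a < n" and b: "b < n"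
  shows "(Wm n \<sigma> lam * iota n d M * Wim n \<sigma> lam) $$ (\<sigma> a, \<sigma> b)
    = (if a mod d = b mod d then fls_const (M $$ (a,b)) * sp (Fd d lam a - Fd d lam b) else (0 :: 'a::field fls))"
proof -
  have "(Wm n \<sigma> lam * iota n d M * Wim n \<sigma> lam) $$ (\<sigma> a, \<sigma> b) = sp (lam a) * iota n d M $$ (a, b) * sp (- lam b)"
    unfolding Wm_def Wim_def by (rule wt_conj_entry[OF p iota_carrier a b])
  also have "\<dots> = (if a mod d = b mod d then fls_const (M $$ (a,b)) * sp (Fd d lam a - Fd d lam b) else 0)"
  proof (cases "a mod d = b mod d")
    case True
    have "sp (lam a) * (fls_const (M $$ (a,b)) * sp ((int a - int b) div int d)) * sp (- lam b)
       = fls_const (M $$ (a,b)) * (sp (lam a) * sp ((int a - int b) div int d) * sp (- lam b))"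
      by (simp add: ac_simps)
    also have "\<dots> = fls_const (M $$ (a,b)) * sp (Fd d lam a - Fd d lam b)"
      by (simp add: sp_mult div_diff[OF True] Fd_def algebra_simps)
    finally show ?thesis using True a b by (simp add: iota_entry)
  qed (use a b in \<open>simp add: iota_entry\<close>)
  finally show ?thesis .
qed

lemma lex_trans:
  fixes x y z :: int and s1 s2 s3 :: nat
  shows "y < x \<or> (x = y \<and> s1 < s2) \<Longrightarrow> z < y \<or> (y = z \<and> s2 < s3) \<Longrightarrow> z < x \<or> (x = z \<and> s1 < s3)"
  by auto

lemma order_chain:
  fixes \<sigma> :: "nat \<Rightarrow> nat"
  assumes d: "0 < d"
    and pos: "\<And>i. i + d < n \<Longrightarrow> Fd d lam (i + d) \<le> Fd d lam i \<and> (Fd d lam i = Fd d lam (i + d) \<longrightarrow> \<sigma> i < \<sigma> (i + d))"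
    and ab: "a < b" "b < n" "a mod d = b mod d"
  shows "Fd d lam b < Fd d lam a \<or> (Fd d lam a = Fd d lam b \<and> \<sigma> a < \<sigma> (b::nat))"
proof -
  let ?P = "\<lambda>a b. Fd d lam b < Fd d lam a \<or> (Fd d lam a = Fd d lam b \<and> \<sigma> a < \<sigma> (b::nat))"
  have dv: "d dvd b - a" using ab by (metis mod_eq_dvd_iff_nat less_imp_le)
  then obtain k where k: "b - a = d * k" by blast
  have k1: "k \<ge> 1" using k ab by (cases k) auto
  have main: "\<And>k. a + d * Suc k < n \<Longrightarrow> ?P a (a + d * Suc k)"
  proof -
    fix k show "a + d * Suc k < n \<Longrightarrow> ?P a (a + d * Suc k)"
    proof (induction k)
      case 0
      then show ?case using pos[of a] by auto
    next
      case (Suc k)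
      have IH: "?P a (a + d * Suc k)" using Suc by auto
      have st: "Fd d lam (a + d * Suc k + d) \<le> Fd d lam (a + d * Suc k) \<and> (Fd d lam (a + d * Suc k) = Fd d lam (a + d * Suc k + d) \<longrightarrow> \<sigma> (a + d * Suc k) < \<sigma> (a + d * Suc k + d))"
        using pos[of "a + d * Suc k"] Suc.prems by (simp add: algebra_simps)
      have eq: "a + d * Suc (Suc k) = a + d * Suc k + d" by (simp add: algebra_simps)
      have st': "Fd d lam (a + d * Suc k + d) < Fd d lam (a + d * Suc k) \<or> (Fd d lam (a + d * Suc k) = Fd d lam (a + d * Suc k + d) \<and> \<sigma> (a + d * Suc k) < \<sigma> (a + d * Suc k + d))"
        using st by auto
      show ?case unfolding eq by (rule lex_trans[OF IH st'])
    qed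
  qed
  have "b = a + d * Suc (k - 1)" using k k1 ab by simp
  then show ?thesis using main[of "k - 1"] ab by simp
qed

lemma pos_from_aff:
  fixes \<sigma> :: "nat \<Rightarrow> nat" and lam :: "nat \<Rightarrow> int"
  assumes p: "\<sigma> permutes {..<n}" and d: "0 < d" and i: "i + d < n"
    and aff: "aff_pos_after n (Wm n \<sigma> lam :: 'a::field fls mat) i (i + d) (-1)"
  shows "Fd d lam (i + d) \<le> Fd d lam i \<and> (Fd d lam i = Fd d lam (i + d) \<longrightarrow> \<sigma> i < \<sigma> (i + d))"
proof -
  let ?W = "Wm n \<sigma> lam :: 'a fls mat"
  let ?g = "root_elem n i (i + d) (-1) (1::'a)"
  let ?h = "?W * ?g * minv n ?W"
  have mW: "minv n ?W = Wim n \<sigma> lam" using W_ipair[OF p] unfolding ipair_def by (intro minv_eq) auto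
  have "?g \<in> root_sub n i (i + d) (-1)" unfolding root_sub_def by auto
  then have "?h \<in> conj_set n ?W (root_sub n i (i + d) (-1))" unfolding conj_set_def by blast
  then have hI: "?h \<in> Iwah n" using aff unfolding aff_pos_after_def by blast
  have gc: "?g \<in> carrier_mat n n" unfolding root_elem_def by simp
  have ii: "i < n" "i + d < n" using i by auto
  have "?h $$ (\<sigma> i, \<sigma> (i + d)) = sp (lam i) * ?g $$ (i, i + d) * sp (- lam (i + d))"
    unfolding mW unfolding Wm_def Wim_def by (rule wt_conj_entry[OF p gc ii])
  also have "?g $$ (i, i + d) = sp (-1)" using ii d unfolding root_elem_def by simp
  also have "sp (lam i) * sp (-1) * sp (- lam (i + d)) = (sp (Fd d lam i - Fd d lam (i + d)) :: 'a fls)"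
  proof -
    have "(i + d) div d = i div d + 1" using d by simp
    then show ?thesis by (simp add: sp_mult Fd_def algebra_simps)
  qed
  finally have he: "?h $$ (\<sigma> i, \<sigma> (i + d)) = sp (Fd d lam i - Fd d lam (i + d))" .
  have si: "\<sigma> i < n" "\<sigma> (i + d) < n" using perm_lt[OF p] ii by auto
  have kp: "in_kpow (?h $$ (\<sigma> i, \<sigma> (i + d)))" using hI si unfolding Iwah_def GL_R_def by auto
  have ct: "\<sigma> (i + d) < \<sigma> i \<longrightarrow> fls_nth (?h $$ (\<sigma> i, \<sigma> (i + d))) 0 = 0"
    using hI si unfolding Iwah_def by auto
  have r: "Fd d lam (i + d) \<le> Fd d lam i"
  proof (rule ccontr)
    assume "\<not> ?thesis"
    then have "Fd d lam i - Fd d lam (i + d) < 0" by simp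
    then show False using kp unfolding he in_kpow_def
      by (auto simp: nth_sp dest!: spec[of _ "Fd d lam i - Fd d lam (i + d)"])
  qed
  have "\<sigma> i \<noteq> \<sigma> (i + d)" using permutes_inj[OF p] d by (metis add_cancel_left_right inj_eq less_irrefl_nat)
  moreover have "Fd d lam i = Fd d lam (i + d) \<longrightarrow> \<not> \<sigma> (i + d) < \<sigma> i"
    using ct unfolding he by (auto simp: nth_sp)
  ultimately show ?thesis using r by auto
qed

definition lowtri :: "nat \<Rightarrow> 'b::zero mat \<Rightarrow> bool" where
  "lowtri n M \<longleftrightarrow> (\<forall>a b. a < b \<longrightarrow> b < n \<longrightarrow> M $$ (a,b) = 0)"

lemma KA1:
  fixes \<sigma> :: "nat \<Rightarrow> nat" and M :: "'a::field mat"
  assumes p: "\<sigma> permutes {..<n}"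
    and ord: "\<And>a b. a < b \<Longrightarrow> b < n \<Longrightarrow> a mod d = b mod d \<Longrightarrow> Fd d lam b < Fd d lam a \<or> (Fd d lam a = Fd d lam b \<and> \<sigma> a < \<sigma> b)"
    and M: "M \<in> carrier_mat n n" and bM: "blk n d M"
    and hI: "Wm n \<sigma> lam * iota n d M * Wim n \<sigma> lam \<in> Iminus n"
  shows "lowtri n M"
  unfolding lowtri_def
proof (intro allI impI)
  fix a b assume ab: "a < b" and b: "b < n"
  have a: "a < n" using ab b by simp
  show "M $$ (a,b) = 0"
  proof (cases "a mod d = b mod d")
    case False then show ?thesis using bM a b unfolding blk_def by auto
  next
    case True
    let ?h = "Wm n \<sigma> lam * iota n d M * Wim n \<sigma> lam"
    have he: "?h $$ (\<sigma> a, \<sigma> b) = fls_const (M $$ (a,b)) * sp (Fd d lam a - Fd d lam b)"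
      using h_entry[OF p a b, of lam d M] True by simp
    have si: "\<sigma> a < n" "\<sigma> b < n" using perm_lt[OF p] a b by auto
    have ki: "in_kinv (?h $$ (\<sigma> a, \<sigma> b))" using hI si unfolding Iminus_def GL_R_def by auto
    have ct: "\<sigma> a < \<sigma> b \<longrightarrow> fls_nth (?h $$ (\<sigma> a, \<sigma> b)) 0 = 0"
      using hI si unfolding Iminus_def by auto
    from ord[OF ab b True] show ?thesis
    proof
      assume lt: "Fd d lam b < Fd d lam a"
      have "fls_nth (?h $$ (\<sigma> a, \<sigma> b)) (Fd d lam a - Fd d lam b) = 0"
        using ki lt unfolding in_kinv_def by auto
      then show ?thesis unfolding he nth_const_sp by simp
    next
      assume "Fd d lam a = Fd d lam b \<and> \<sigma> a < \<sigma> b"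
      then show ?thesis using ct unfolding he nth_const_sp by simp
    qed
  qed
qed

lemma KA_ent:
  fixes \<sigma> :: "nat \<Rightarrow> nat" and N :: "'a::field mat"
  assumes p: "\<sigma> permutes {..<n}"
    and ord: "\<And>a b. a < b \<Longrightarrow> b < n \<Longrightarrow> a mod d = b mod d \<Longrightarrow> Fd d lam b < Fd d lam a \<or> (Fd d lam a = Fd d lam b \<and> \<sigma> a < \<sigma> b)"
    and lN: "lowtri n N" and q: "q1 < n" "q2 < n"
  shows "in_kinv ((Wm n \<sigma> lam * iota n d N * Wim n \<sigma> lam) $$ (q1,q2)) \<and>
     (q1 < q2 \<longrightarrow> fls_nth ((Wm n \<sigma> lam * iota n d N * Wim n \<sigma> lam) $$ (q1,q2)) 0 = 0)"
proof -
  let ?h = "Wm n \<sigma> lam * iota n d N * Wim n \<sigma> lam"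
  define a where "a = inv_into UNIV \<sigma> q1"
  define b where "b = inv_into UNIV \<sigma> q2"
  have a: "a < n" and b: "b < n" using perm_inv_lt[OF p] q unfolding a_def b_def by auto
  have qa: "q1 = \<sigma> a" and qb: "q2 = \<sigma> b" unfolding a_def b_def using permutes_inverses(1)[OF p] by auto
  have he: "?h $$ (q1,q2) = (if a mod d = b mod d then fls_const (N $$ (a,b)) * sp (Fd d lam a - Fd d lam b) else 0)"
    unfolding qa qb by (rule h_entry[OF p a b])
  show ?thesis
  proof (cases "a mod d = b mod d \<and> N $$ (a,b) \<noteq> 0")
    case False
    then have "?h $$ (q1,q2) = 0" unfolding he by auto
    then show ?thesis unfolding in_kinv_def by simp
  next
    case True
    then have ba: "b \<le> a" using lN a b unfolding lowtri_def by (meson not_le)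
    have he2: "?h $$ (q1,q2) = fls_const (N $$ (a,b)) * sp (Fd d lam a - Fd d lam b)" using he True by simp
    show ?thesis
    proof (cases "a = b")
      case True then show ?thesis unfolding he2 in_kinv_def nth_const_sp using qa qb by auto
    next
      case False
      then have ba': "b < a" using ba by simp
      from ord[OF ba' a] True have o: "Fd d lam a < Fd d lam b \<or> (Fd d lam b = Fd d lam a \<and> \<sigma> b < \<sigma> a)" by auto
      then show ?thesis unfolding he2 in_kinv_def nth_const_sp using qa qb by auto
    qed
  qed
qed

lemma KA2:
  fixes \<sigma> :: "nat \<Rightarrow> nat" and M :: "'a::field mat"
  assumes p: "\<sigma> permutes {..<n}"
    and ord: "\<And>a b. a < b \<Longrightarrow> b < n \<Longrightarrow> a mod d = b mod d \<Longrightarrow> Fd d lam b < Fd d lam a \<or> (Fd d lam a = Fd d lam b \<and> \<sigma> a < \<sigma> b)"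
    and M: "M \<in> carrier_mat n n" and bM: "blk n d M" and lM: "lowtri n M" and ip: "ipair n M B"
  shows "Wm n \<sigma> lam * iota n d M * Wim n \<sigma> lam \<in> Iminus n"
proof -
  have B: "B \<in> carrier_mat n n" and MB: "M * B = 1\<^sub>m n" and BM: "B * M = 1\<^sub>m n" using ip unfolding ipair_def by auto
  let ?R = "\<lambda>i k. k \<le> i \<and> i mod d = k mod d"
  have dg: "\<And>i. i < n \<Longrightarrow> M $$ (i,i) \<noteq> 0"
    by (rule lower_diag_nz[OF M B MB]) (use lM in \<open>auto simp: lowtri_def\<close>)
  have sB: "\<And>i j. i < n \<Longrightarrow> j < n \<Longrightarrow> \<not> ?R i j \<Longrightarrow> B $$ (i,j) = 0"
  proof -
    fix i j assume i: "i < n" and j: "j < n" and nR: "\<not> ?R i j"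
    show "B $$ (i,j) = 0"
    proof (rule supp_inv[OF M B MB, where R = ?R and \<mu> = id, OF _ _ _ _ dg j i nR])
      fix i k assume "i < n" "k < n" "M $$ (i,k) \<noteq> 0"
      then show "?R i k" using lM bM unfolding lowtri_def blk_def by (meson not_le)
    qed auto
  qed
  have bB: "blk n d B" unfolding blk_def using sB by auto
  have lB: "lowtri n B" unfolding lowtri_def using sB by auto
  let ?W = "Wm n \<sigma> lam :: 'a fls mat" and ?Wi = "Wim n \<sigma> lam :: 'a fls mat"
  let ?h = "?W * iota n d M * ?Wi" and ?h' = "?W * iota n d B * ?Wi"
  have WW: "?W * ?Wi = 1\<^sub>m n" "?Wi * ?W = 1\<^sub>m n" using W_ipair[OF p] unfolding ipair_def by auto
  have "?h * ?h' = ?W * (iota n d M * ((?Wi * ?W) * (iota n d B * ?Wi)))"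
    by (simp add: asn[of _ n] mcn[of _ n])
  also have "\<dots> = ?W * ((iota n d M * iota n d B) * ?Wi)"
    unfolding WW by (simp add: asn[of _ n] mcn[of _ n] one_left_n[of _ n])
  also have "\<dots> = 1\<^sub>m n" unfolding iota_mult[OF M B bM] MB iota_one using WW by (simp add: one_left_n[of _ n])
  finally have 1: "?h * ?h' = 1\<^sub>m n" .
  have "?h' * ?h = ?W * (iota n d B * ((?Wi * ?W) * (iota n d M * ?Wi)))"
    by (simp add: asn[of _ n] mcn[of _ n])
  also have "\<dots> = ?W * ((iota n d B * iota n d M) * ?Wi)"
    unfolding WW by (simp add: asn[of _ n] mcn[of _ n] one_left_n[of _ n])
  also have "\<dots> = 1\<^sub>m n" unfolding iota_mult[OF B M bB] BM iota_one using WW by (simp add: one_left_n[of _ n])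
  finally have 2: "?h' * ?h = 1\<^sub>m n" .
  have e1: "\<forall>i<n. \<forall>j<n. in_kinv (?h $$ (i,j))" using KA_ent[OF p ord lM] by blast
  have e2: "\<forall>i<n. \<forall>j<n. in_kinv (?h' $$ (i,j))" using KA_ent[OF p ord lB] by blast
  have e3: "\<forall>i<n. \<forall>j<n. i < j \<longrightarrow> fls_nth (?h $$ (i,j)) 0 = 0" using KA_ent[OF p ord lM] by blast
  have c: "?h \<in> carrier_mat n n" "?h' \<in> carrier_mat n n" by (simp_all add: mcn[of _ n])
  show ?thesis unfolding Iminus_def GL_R_def using e1 e2 e3 c 1 2 by blast
qed

lemma iota_gdiag: "iota n d (gdiag n f) = mat n n (\<lambda>(i,j). if i = j then fls_const (f i) else (0 :: 'a::field fls))"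
  by (rule eq_matI) (auto simp: iota_entry gdiag_def)

lemma blk_gdiag: "blk n d (gdiag n f)" unfolding blk_def gdiag_def by auto

lemma G0_blk: "c \<in> G0 n d \<Longrightarrow> blk n d c" unfolding G0_def blk_def by auto

lemma KB1:
  fixes M :: "'a::field mat"
  assumes M: "M \<in> carrier_mat n n" and bM: "blk n d M" and h: "iota n d M \<in> BLm n d"
  shows "lowtri n M"
proof -
  obtain t v where tv: "iota n d M = t * v" "t \<in> Tk n" "v \<in> ULm n d" using h unfolding BLm_def by auto
  obtain f where f: "t = mat n n (\<lambda>(i,j). if i = j then fls_const (f i) else 0)" using tv(2) unfolding Tk_def by auto
  obtain Z where Z: "v = iota n d Z" "Z \<in> G0 n d" "\<forall>i<n. \<forall>j<n. (i = j \<longrightarrow> Z $$ (i,j) = 1) \<and> (i < j \<longrightarrow> Z $$ (i,j) = 0)"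
    using tv(3) unfolding ULm_def by auto
  have Zc: "Z \<in> carrier_mat n n" using Z(2) unfolding G0_def by auto
  have tf: "t = iota n d (gdiag n f)" unfolding f iota_gdiag by simp
  have "t * v = iota n d (gdiag n f * Z)" unfolding tf Z(1)
    by (rule iota_mult[OF gdiag_carrier Zc blk_gdiag])
  then have "M = gdiag n f * Z"
    using tv(1) by (intro iota_inj[OF M _ bM]) (auto intro!: blk_mult[OF gdiag_carrier Zc blk_gdiag G0_blk[OF Z(2)]] simp: mcn[of _ n] Zc)
  then show ?thesis unfolding lowtri_def using Z(3) Zc by (auto simp: gdiag_left[OF Zc])
qed

lemma gdiag_ipair:
  fixes f :: "nat \<Rightarrow> 'b::field"
  assumes "\<And>i. i < n \<Longrightarrow> f i \<noteq> 0"
  shows "ipair n (gdiag n f) (gdiag n (\<lambda>i. 1 / f i))"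
  unfolding ipair_def using assms
  by (auto simp: gdiag_left[OF gdiag_carrier] intro!: eq_matI) (auto simp: gdiag_def)

lemma KB2:
  fixes M :: "'a::field mat"
  assumes M: "M \<in> carrier_mat n n" and bM: "blk n d M" and lM: "lowtri n M" and ip: "ipair n M B"
  shows "iota n d M \<in> BLm n d"
proof -
  have B: "B \<in> carrier_mat n n" and MB: "M * B = 1\<^sub>m n" using ip unfolding ipair_def by auto
  have dg: "\<And>i. i < n \<Longrightarrow> M $$ (i,i) \<noteq> 0"
    by (rule lower_diag_nz[OF M B MB]) (use lM in \<open>auto simp: lowtri_def\<close>)
  let ?D = "gdiag n (\<lambda>i. M $$ (i,i))" and ?Di = "gdiag n (\<lambda>i. 1 / M $$ (i,i))"
  let ?Z = "?Di * M"
  have Zc: "?Z \<in> carrier_mat n n" using M by (simp add: mcn[of _ n])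
  have ipZ: "\<exists>B. ipair n ?Z B" using ipair_mult[OF ipair_sym[OF gdiag_ipair[of n "\<lambda>i. M $$ (i,i)"]] ip] dg by auto
  have Ze: "\<And>i j. i < n \<Longrightarrow> j < n \<Longrightarrow> ?Z $$ (i,j) = M $$ (i,j) / M $$ (i,i)"
    using M by (simp add: gdiag_left[OF M])
  have ZG: "?Z \<in> G0 n d" unfolding G0_def using Zc ipZ ipair_invertible[OF Zc] bM Ze unfolding blk_def by auto
  have Zu: "\<forall>i<n. \<forall>j<n. (i = j \<longrightarrow> ?Z $$ (i,j) = 1) \<and> (i < j \<longrightarrow> ?Z $$ (i,j) = 0)"
    using Ze dg lM unfolding lowtri_def by auto
  have v: "iota n d ?Z \<in> ULm n d" unfolding ULm_def using ZG Zu by blast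
  have t: "iota n d ?D \<in> Tk n" unfolding iota_gdiag Tk_def using dg by (auto intro!: exI[of _ "\<lambda>i. M $$ (i,i)"])
  have "?D * ?Z = M" using M dg by (auto simp: gdiag_left[OF Zc] Ze intro!: eq_matI)
  then have "iota n d ?D * iota n d ?Z = iota n d M" using iota_mult[OF gdiag_carrier Zc blk_gdiag] by simp
  then show ?thesis unfolding BLm_def using t v by force
qed

lemma perm_conj_entry:
  fixes A :: "'b::comm_ring_1 mat"
  assumes p: "\<pi> permutes {..<n}" and A: "A \<in> carrier_mat n n" and i: "i < n" and j: "j < n"
  shows "(perm_mat n \<pi> * A * perm_mat n (inv_into UNIV \<pi>)) $$ (i,j) = A $$ (inv_into UNIV \<pi> i, inv_into UNIV \<pi> j)"
proof -
  have pi: "inv_into UNIV \<pi> permutes {..<n}" using p by (rule permutes_inv)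
  have "perm_mat n \<pi> * A * perm_mat n (inv_into UNIV \<pi>) = perm_mat n \<pi> * (A * perm_mat n (inv_into UNIV \<pi>))"
    using A by (simp add: asn[of _ n])
  also have "A * perm_mat n (inv_into UNIV \<pi>) = mat n n (\<lambda>(i,j). A $$ (i, inv_into UNIV \<pi> j))"
    by (rule perm_right[OF pi A])
  also have "perm_mat n \<pi> * mat n n (\<lambda>(i,j). A $$ (i, inv_into UNIV \<pi> j)) = mat n n (\<lambda>(i,j). mat n n (\<lambda>(i,j). A $$ (i, inv_into UNIV \<pi> j)) $$ (inv_into UNIV \<pi> i, j))"
    by (rule perm_left[OF p]) simp
  finally show ?thesis using i j perm_inv_lt[OF p] by simp
qed

lemma iota_mult3:
  assumes "A \<in> carrier_mat n n" "B \<in> carrier_mat n n" "C \<in> carrier_mat n n" "blk n d A" "blk n d B"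
  shows "iota n d A * iota n d B * iota n d C = (iota n d (A * B * C) :: 'a::field fls mat)"
  using assms by (simp add: iota_mult blk_mult mcn[of _ n] del: assoc_mult_mat)

lemma ipair_iota:
  assumes "ipair n A B" "blk n d A" "blk n d B"
  shows "ipair n (iota n d A) (iota n d B :: 'a::field fls mat)"
  using assms unfolding ipair_def by (auto simp: iota_mult iota_one)

lemma minv_ipair: "ipair n A (B :: 'a::field fls mat) \<Longrightarrow> minv n A = B"
  unfolding ipair_def by (intro minv_eq) auto

lemma G0_props:
  assumes "C \<in> G0 n d"
  shows "C \<in> carrier_mat n n" "blk n d C" "\<exists>B. ipair n C B"
  using assms ipair_invertible[of C n] unfolding G0_def blk_def by auto

definition uptri :: "nat \<Rightarrow> 'b::zero mat \<Rightarrow> bool" where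
  "uptri n A \<longleftrightarrow> (\<forall>i j. j < i \<longrightarrow> i < n \<longrightarrow> A $$ (i,j) = 0)"

lemma uptri_mult:
  fixes A B :: "'b::comm_ring_1 mat"
  assumes "A \<in> carrier_mat n n" "B \<in> carrier_mat n n" "uptri n A" "uptri n B"
  shows "uptri n (A * B)" "\<And>i. i < n \<Longrightarrow> (A * B) $$ (i,i) = A $$ (i,i) * B $$ (i,i)"
  using up_mult[OF assms(1,2)] assms(3,4) unfolding uptri_def by blast+

lemma uptri_gdiag: "uptri n (gdiag n f)" unfolding uptri_def gdiag_def by auto

lemma Bphi0_uptri: "C \<in> Bphi0 n d \<Longrightarrow> uptri n C" unfolding Bphi0_def uptri_def by auto

lemma uptri_diag_nz:
  fixes C :: "'b::field mat"
  assumes "uptri n C" "ipair n C Ci" "i < n"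
  shows "C $$ (i,i) \<noteq> 0"
  using upper_diag_nz[of C n Ci i] assms unfolding uptri_def ipair_def by auto

theorem lemma10p4:
  fixes n d :: nat and wt w u :: "'a::field fls mat"
  assumes "1 \<le> d" and "d \<le> n"
    and "wt \<in> Wtil n"
    and "\<forall>i. i + d < n \<longrightarrow> aff_pos_after n wt i (i + d) (-1)"
    and "w \<in> WL n d" and "u \<in> Ups n d"
  defines "l \<equiv> w * u"
  defines "x \<equiv> wt * l"
  shows "Bphi n d \<inter> conj_set n (minv n x) (Iminus n)
           = Bphi n d \<inter> conj_set n (minv n l) (BLm n d)
       \<and> Bphi n d \<inter> conj_set n (minv n l) (BLm n d)
           = {t * v | t v. t \<in> Tphi n d \<and> v \<in> Uphi n d \<and>
                (minv n t * u * t) * v * minv n u \<in> UL n d \<inter> conj_set n (minv n w) (ULm n d)}"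
proof -
  have d0: "0 < d" using assms(1) by simp
  obtain \<sigma> lam where p: "\<sigma> permutes {..<n}" and wtd: "wt = Wm n \<sigma> lam"
    using assms(3) unfolding Wtil_def Wm_def by auto
  have pos: "Fd d lam (i + d) \<le> Fd d lam i \<and> (Fd d lam i = Fd d lam (i + d) \<longrightarrow> \<sigma> i < \<sigma> (i + d))"
    if "i + d < n" for i
    using pos_from_aff[OF p d0 that] assms(4) that wtd by auto
  have ord: "Fd d lam b < Fd d lam a \<or> (Fd d lam a = Fd d lam b \<and> \<sigma> a < \<sigma> b)"
    if "a < b" "b < n" "a mod d = b mod d" for a b
    by (rule order_chain[OF d0 pos that])
  obtain \<pi> where pp: "\<pi> permutes {..<n}" and wd: "w = iota n d (perm_mat n \<pi>)" and PG: "(perm_mat n \<pi> :: 'a mat) \<in> G0 n d"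
    using assms(5) unfolding WL_def by auto
  define Pw where "Pw = (perm_mat n \<pi> :: 'a mat)"
  define Pwi where "Pwi = (perm_mat n (inv_into UNIV \<pi>) :: 'a mat)"
  have Pwc: "Pw \<in> carrier_mat n n" "Pwi \<in> carrier_mat n n" unfolding Pw_def Pwi_def by auto
  have bPw: "blk n d Pw" using G0_blk[OF PG] unfolding Pw_def .
  have pimod: "\<pi> i mod d = i mod d" if "i < n" for i
  proof (rule ccontr)
    assume "\<pi> i mod d \<noteq> i mod d"
    then have "Pw $$ (\<pi> i, i) = 0" using bPw that perm_lt[OF pp that] unfolding blk_def by auto
    then show False using that perm_lt[OF pp that] unfolding Pw_def perm_mat_def by simp
  qed
  have bPwi: "blk n d Pwi" unfolding blk_def Pwi_def perm_mat_def
  proof (intro allI impI)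
    fix i j assume ij: "i < n" "j < n" "i mod d \<noteq> j mod d"
    show "mat n n (\<lambda>(i, j). if i = inv_into UNIV \<pi> j then 1 else 0) $$ (i, j) = (0::'a)"
    proof (cases "i = inv_into UNIV \<pi> j")
      case True
      then have "\<pi> i = j" using permutes_inverses(1)[OF pp] by auto
      then show ?thesis using pimod[of i] ij by auto
    qed (use ij in auto)
  qed
  have ipP: "ipair n Pw Pwi" unfolding ipair_def Pw_def Pwi_def using perm_perm_inv[OF pp] by auto
  obtain U where ud: "u = iota n d U" and Uc: "U \<in> carrier_mat n n"
    and UC: "\<forall>i<n. \<forall>j<n. (i = j \<longrightarrow> U $$ (i,j) = 1) \<and> (i \<noteq> j \<and> U $$ (i,j) \<noteq> 0 \<longrightarrow> i < d \<and> i + d \<le> j \<and> i mod d = j mod d)"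
    using assms(6) unfolding Ups_def by auto
  have bU: "blk n d U" unfolding blk_def using UC by auto
  have upU: "U $$ (i,j) = 0" if "j < i" "i < n" for i j
    using UC[rule_format, of i j] that by (cases "U $$ (i,j) = 0") auto
  have detU: "det U = 1"
  proof -
    have ut: "upper_triangular U" unfolding upper_triangular_def using upU Uc by auto
    show ?thesis using det_upper_triangular[OF ut Uc] Uc UC by (simp add: prod_list_diag_prod)
  qed
  obtain Ui where ipU: "ipair n U Ui" using det_ipair[OF Uc] detU by auto
  have Uic: "Ui \<in> carrier_mat n n" and UUi: "U * Ui = 1\<^sub>m n" and UiU: "Ui * U = 1\<^sub>m n" using ipU unfolding ipair_def by auto
  have sUi: "Ui $$ (i,j) = 0" if "i < n" "j < n" "\<not> (i \<le> j \<and> i mod d = j mod d)" for i j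
  proof (rule supp_inv[OF Uc Uic UUi, where R = "\<lambda>i k. i \<le> k \<and> i mod d = k mod d" and \<mu> = "\<lambda>i. n - i", OF _ _ _ _ _ that(2,1,3)])
    fix i k assume "i < n" "k < n" "U $$ (i,k) \<noteq> 0"
    then show "i \<le> k \<and> i mod d = k mod d" using UC by (cases "i = k") fastforce+
  next
    fix i k assume "i < n" "k < n" "i \<le> k \<and> i mod d = k mod d" "i \<noteq> k"
    then show "n - k < n - i" by auto
  next
    fix i assume "i < n" then show "U $$ (i,i) \<noteq> 0" using UC by auto
  qed auto
  have bUi: "blk n d Ui" unfolding blk_def using sUi by auto
  have upUi: "Ui $$ (i,j) = 0" if "j < i" "i < n" for i j using sUi that by auto
  have dUi: "Ui $$ (i,i) = 1" if "i < n" for i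
    using up_mult(2)[OF Uic Uc upUi upU that] UiU UC that by simp
  have mu: "minv n u = iota n d Ui" unfolding ud by (rule minv_iota[OF ipU bU bUi])
  have mw: "minv n w = iota n d Pwi" unfolding wd Pw_def[symmetric] by (rule minv_iota[OF ipP bPw bPwi])
  have ld: "l = iota n d (Pw * U)" unfolding l_def wd ud Pw_def by (rule iota_mult[OF _ Uc bPw[unfolded Pw_def]]) simp
  have ipl: "ipair n (Pw * U) (Ui * Pwi)" by (rule ipair_mult[OF ipP ipU])
  have bl: "blk n d (Pw * U)" "blk n d (Ui * Pwi)"
    using blk_mult[OF Pwc(1) Uc bPw bU] blk_mult[OF Uic Pwc(2) bUi bPwi] by auto
  have ipli: "ipair n l (iota n d (Ui * Pwi))" unfolding ld by (rule ipair_iota[OF ipl bl])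
  have ml: "minv n l = iota n d (Ui * Pwi)" by (rule minv_ipair[OF ipli])
  have ipx: "ipair n x (iota n d (Ui * Pwi) * Wim n \<sigma> lam)"
    unfolding x_def wtd by (rule ipair_mult[OF W_ipair[OF p] ipli])
  have mx: "minv n x = iota n d (Ui * Pwi) * Wim n \<sigma> lam" by (rule minv_ipair[OF ipx])
  define MM where "MM C = Pw * (U * C * Ui) * Pwi" for C
  have Mcomp: "l * iota n d C * minv n l = iota n d (MM C)" if "C \<in> carrier_mat n n" "blk n d C" for C
  proof -
    have "l * iota n d C * minv n l = iota n d (Pw * U * C * (Ui * Pwi))"
      unfolding ml unfolding ld by (rule iota_mult3) (use that Pwc Uc Uic bl in \<open>auto simp: mcn[of _ n]\<close>)
    also have "Pw * U * C * (Ui * Pwi) = MM C" unfolding MM_def using that Pwc Uc Uic by (simp add: asn[of _ n] mcn[of _ n])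
    finally show ?thesis .
  qed
  have Mprops: "MM C \<in> carrier_mat n n \<and> blk n d (MM C) \<and> (\<exists>B. ipair n (MM C) B)"
    if "C \<in> carrier_mat n n" "blk n d C" "ipair n C Ci" for C Ci
  proof -
    have "ipair n (Pw * (U * C * Ui) * Pwi) (Pw * (U * Ci * Ui) * Pwi)"
    proof -
      have Cic: "Ci \<in> carrier_mat n n" using that(3) unfolding ipair_def by auto
      have "ipair n (U * C * Ui) (U * Ci * Ui)"
        using ipair_mult[OF ipair_mult[OF ipU that(3)] ipair_sym[OF ipU]] Uc Uic that(1) Cic
        by (simp add: asn[of _ n] mcn[of _ n])
      then show ?thesis using ipair_mult[OF ipair_mult[OF ipP] ipair_sym[OF ipP]]
        using Pwc by (simp add: asn[of _ n] mcn[of _ n] ipair_def)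
    qed
    moreover have "blk n d (MM C)" unfolding MM_def
      using that Pwc Uc Uic bPw bU bUi bPwi by (simp add: blk_mult mcn[of _ n])
    ultimately show ?thesis unfolding MM_def ipair_def by blast
  qed
  have eqA: "(iota n d C \<in> conj_set n (minv n x) (Iminus n) \<longleftrightarrow> lowtri n (MM C)) \<and>
             (iota n d C \<in> conj_set n (minv n l) (BLm n d) \<longleftrightarrow> lowtri n (MM C))"
    if C0: "C \<in> G0 n d" for C
  proof -
    obtain Ci where C: "C \<in> carrier_mat n n" "blk n d C" "ipair n C Ci" using G0_props[OF C0] by blast
    obtain MB where MP: "MM C \<in> carrier_mat n n" "blk n d (MM C)" "ipair n (MM C) MB" using Mprops[OF C] by blast
    have Isub: "Iminus n \<subseteq> carrier_mat n n" unfolding Iminus_def GL_R_def by auto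
    have Bsub: "BLm n d \<subseteq> carrier_mat n n" unfolding BLm_def Tk_def ULm_def by (auto simp: mcn[of _ n])
    have lc: "l \<in> carrier_mat n n" "minv n l \<in> carrier_mat n n" using ipli ml unfolding ipair_def by auto
    have "x * iota n d C * minv n x = Wm n \<sigma> lam * (l * iota n d C * minv n l) * Wim n \<sigma> lam"
      unfolding mx ml[symmetric] unfolding x_def wtd using lc by (simp add: asn[of _ n] mcn[of _ n])
    also have "\<dots> = Wm n \<sigma> lam * iota n d (MM C) * Wim n \<sigma> lam" using Mcomp[OF C(1,2)] by simp
    finally have xe: "x * iota n d C * minv n x = Wm n \<sigma> lam * iota n d (MM C) * Wim n \<sigma> lam" .
    have 1: "iota n d C \<in> conj_set n (minv n x) (Iminus n) \<longleftrightarrow> x * iota n d C * minv n x \<in> Iminus n"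
      by (rule conj_mem) (use ipx mx Isub in \<open>auto simp: ipair_def\<close>)
    have 2: "iota n d C \<in> conj_set n (minv n l) (BLm n d) \<longleftrightarrow> l * iota n d C * minv n l \<in> BLm n d"
      by (rule conj_mem) (use ipli ml Bsub in \<open>auto simp: ipair_def\<close>)
    show ?thesis unfolding 1 2 xe Mcomp[OF C(1,2)]
      using KA1[OF p ord MP(1,2)] KA2[OF p ord MP(1,2) _ MP(3)] KB1[OF MP(1,2)] KB2[OF MP(1,2) _ MP(3)] by blast
  qed
  have core: "minv n (iota n d (gdiag n f)) * u * iota n d (gdiag n f) * iota n d V * minv n u
        = iota n d (gdiag n (\<lambda>i. 1 / f i) * U * gdiag n f * V * Ui)
      \<and> gdiag n (\<lambda>i. 1 / f i) * U * gdiag n f * V * Ui \<in> G0 n d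
      \<and> (\<forall>i<n. \<forall>j<n. (i = j \<longrightarrow> (gdiag n (\<lambda>i. 1 / f i) * U * gdiag n f * V * Ui) $$ (i,j) = 1)
            \<and> (j < i \<longrightarrow> (gdiag n (\<lambda>i. 1 / f i) * U * gdiag n f * V * Ui) $$ (i,j) = 0))
      \<and> w * iota n d (gdiag n (\<lambda>i. 1 / f i) * U * gdiag n f * V * Ui) * iota n d Pwi
          = iota n d (Pw * (gdiag n (\<lambda>i. 1 / f i) * U * gdiag n f * V * Ui) * Pwi)
      \<and> Pw * (gdiag n (\<lambda>i. 1 / f i) * U * gdiag n f * V * Ui) * Pwi \<in> G0 n d
      \<and> (\<forall>i<n. (Pw * (gdiag n (\<lambda>i. 1 / f i) * U * gdiag n f * V * Ui) * Pwi) $$ (i,i) = 1)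
      \<and> (lowtri n (MM (gdiag n f * V)) \<longleftrightarrow> lowtri n (Pw * (gdiag n (\<lambda>i. 1 / f i) * U * gdiag n f * V * Ui) * Pwi))
      \<and> gdiag n f * V \<in> G0 n d"
    if fnz: "\<forall>i<n. f i \<noteq> 0" and VB: "V \<in> Bphi0 n d" and V1: "\<forall>i<n. V $$ (i,i) = 1" for f V
  proof -
    let ?T = "gdiag n f" and ?Ti = "gdiag n (\<lambda>i. 1 / f i)"
    let ?Y = "?Ti * U * ?T * V * Ui"
    have VG: "V \<in> G0 n d" using VB unfolding Bphi0_def by auto
    obtain Vi where Vc: "V \<in> carrier_mat n n" and bV: "blk n d V" and ipV: "ipair n V Vi" using G0_props[OF VG] by blast
    have ipT: "ipair n ?T ?Ti" using gdiag_ipair fnz by blast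
    have mt: "minv n (iota n d ?T) = iota n d ?Ti" by (rule minv_iota[OF ipT blk_gdiag blk_gdiag])
    have Tc: "?T \<in> carrier_mat n n" "?Ti \<in> carrier_mat n n" by auto
    have b1: "blk n d (?Ti * U)" by (rule blk_mult[OF Tc(2) Uc blk_gdiag bU])
    have b2: "blk n d (?Ti * U * ?T)" by (rule blk_mult[OF _ Tc(1) b1 blk_gdiag]) (use Uc in \<open>simp add: mcn[of _ n]\<close>)
    have b3: "blk n d (?Ti * U * ?T * V)" by (rule blk_mult[OF _ Vc b2 bV]) (use Uc in \<open>simp add: mcn[of _ n]\<close>)
    have a: "minv n (iota n d ?T) * u * iota n d ?T * iota n d V * minv n u = iota n d ?Y"
      unfolding mt mu unfolding ud
    proof -
      have "iota n d ?Ti * iota n d U = iota n d (?Ti * U)" by (rule iota_mult[OF Tc(2) Uc blk_gdiag])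
      moreover have "iota n d (?Ti * U) * iota n d ?T = iota n d (?Ti * U * ?T)"
        by (rule iota_mult[OF _ Tc(1) b1]) (use Uc in \<open>simp add: mcn[of _ n]\<close>)
      moreover have "iota n d (?Ti * U * ?T) * iota n d V = iota n d (?Ti * U * ?T * V)"
        by (rule iota_mult[OF _ Vc b2]) (use Uc in \<open>simp add: mcn[of _ n]\<close>)
      moreover have "iota n d (?Ti * U * ?T * V) * iota n d Ui = iota n d ?Y"
        by (rule iota_mult[OF _ Uic b3]) (use Uc Vc in \<open>simp add: mcn[of _ n]\<close>)
      ultimately show "iota n d ?Ti * iota n d U * iota n d ?T * iota n d V * iota n d Ui = iota n d ?Y" by simp
    qed
    have Yc: "?Y \<in> carrier_mat n n" using Tc Uc Vc Uic by (simp add: mcn[of _ n])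
    have bY: "blk n d ?Y" by (rule blk_mult[OF _ Uic b3 bUi]) (use Uc Vc in \<open>simp add: mcn[of _ n]\<close>)
    have ipY: "\<exists>B. ipair n ?Y B"
      using ipair_mult[OF ipair_mult[OF ipair_mult[OF ipair_mult[OF ipair_sym[OF ipT] ipU] ipT] ipV] ipair_sym[OF ipU]] by blast
    have YG: "?Y \<in> G0 n d" unfolding G0_def using Yc ipY ipair_invertible[OF Yc] bY unfolding blk_def by auto
    have uU: "uptri n U" unfolding uptri_def using upU by auto
    have uUi: "uptri n Ui" unfolding uptri_def using upUi by auto
    have uV: "uptri n V" using Bphi0_uptri[OF VB] .
    have c1: "?Ti * U \<in> carrier_mat n n" "?Ti * U * ?T \<in> carrier_mat n n" "?Ti * U * ?T * V \<in> carrier_mat n n"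
      using Tc Uc Vc by (simp_all add: mcn[of _ n])
    note m1 = uptri_mult[OF Tc(2) Uc uptri_gdiag uU]
    note m2 = uptri_mult[OF c1(1) Tc(1) m1(1) uptri_gdiag]
    note m3 = uptri_mult[OF c1(2) Vc m2(1) uV]
    note m4 = uptri_mult[OF c1(3) Uic m3(1) uUi]
    have Yu: "\<forall>i<n. \<forall>j<n. (i = j \<longrightarrow> ?Y $$ (i,j) = 1) \<and> (j < i \<longrightarrow> ?Y $$ (i,j) = 0)"
      using m4 m3(2) m2(2) m1(2) fnz V1 dUi UC unfolding uptri_def by (auto simp: gdiag_def)
    have cw: "w * iota n d ?Y * iota n d Pwi = iota n d (Pw * ?Y * Pwi)"
      unfolding wd Pw_def[symmetric] by (rule iota_mult3[OF Pwc(1) Yc Pwc(2) bPw bY])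
    obtain YB where ipYB: "ipair n ?Y YB" using ipY by blast
    have PYc: "Pw * ?Y * Pwi \<in> carrier_mat n n" using Pwc Yc by (simp add: mcn[of _ n])
    have bPY: "blk n d (Pw * ?Y * Pwi)"
      by (rule blk_mult[OF _ Pwc(2) blk_mult[OF Pwc(1) Yc bPw bY] bPwi]) (use Pwc Yc in \<open>simp add: mcn[of _ n]\<close>)
    have ipPY: "ipair n (Pw * ?Y * Pwi) (Pw * (YB * Pwi))"
      using ipair_mult[OF ipair_mult[OF ipP ipYB] ipair_sym[OF ipP]] .
    have PYG: "Pw * ?Y * Pwi \<in> G0 n d" unfolding G0_def using PYc ipPY ipair_invertible[OF PYc] bPY unfolding blk_def by auto
    have PYe: "(Pw * ?Y * Pwi) $$ (i,j) = ?Y $$ (inv_into UNIV \<pi> i, inv_into UNIV \<pi> j)" if "i < n" "j < n" for i j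
      unfolding Pw_def Pwi_def by (rule perm_conj_entry[OF pp Yc that])
    have PYd: "\<forall>i<n. (Pw * ?Y * Pwi) $$ (i,i) = 1"
    proof (intro allI impI)
      fix i assume i: "i < n"
      have "inv_into UNIV \<pi> i < n" using perm_inv_lt[OF pp i] .
      then show "(Pw * ?Y * Pwi) $$ (i,i) = 1" using PYe[OF i i] Yu by simp
    qed
    have TTi: "?T * ?Ti = 1\<^sub>m n" using ipT unfolding ipair_def by auto
    have "?T * ?Y = (?T * ?Ti) * (U * (?T * (V * Ui)))" using Tc Uc Vc Uic by (simp add: asn[of _ n] mcn[of _ n])
    also have "\<dots> = U * (?T * (V * Ui))" unfolding TTi using Tc Uc Vc Uic by (simp add: mcn[of _ n] one_left_n[of _ n])
    also have "\<dots> = U * (?T * V) * Ui" using Tc Uc Vc Uic by (simp add: asn[of _ n] mcn[of _ n])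
    finally have TY: "U * (?T * V) * Ui = ?T * ?Y" by simp
    have TYc: "?T * ?Y \<in> carrier_mat n n" using Tc Yc by (simp add: mcn[of _ n])
    have Me: "MM (?T * V) $$ (i,j) = f (inv_into UNIV \<pi> i) * ?Y $$ (inv_into UNIV \<pi> i, inv_into UNIV \<pi> j)" if "i < n" "j < n" for i j
      unfolding MM_def TY unfolding Pw_def Pwi_def perm_conj_entry[OF pp TYc[unfolded Pw_def] that] unfolding gdiag_left[OF Yc]
      using perm_inv_lt[OF pp] that by simp
    have d: "lowtri n (MM (?T * V)) \<longleftrightarrow> lowtri n (Pw * ?Y * Pwi)"
    proof -
      have "MM (?T * V) $$ (i,j) = 0 \<longleftrightarrow> (Pw * ?Y * Pwi) $$ (i,j) = 0" if "i < n" "j < n" for i j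
        using Me[OF that] PYe[OF that] fnz perm_inv_lt[OF pp that(1)] by simp
      then show ?thesis unfolding lowtri_def by (meson order.strict_trans)
    qed
    have TVG: "?T * V \<in> G0 n d"
    proof -
      have c: "?T * V \<in> carrier_mat n n" using Vc by (simp add: mcn[of _ n])
      have "blk n d (?T * V)" by (rule blk_mult[OF Tc(1) Vc blk_gdiag bV])
      moreover have "\<exists>B. ipair n (?T * V) B" using ipair_mult[OF ipT ipV] by blast
      ultimately show ?thesis unfolding G0_def using c ipair_invertible[OF c] unfolding blk_def by auto
    qed
    show ?thesis using a YG Yu cw PYG PYd d TVG by blast
  qed
  have P1: "Bphi n d \<inter> conj_set n (minv n x) (Iminus n) = Bphi n d \<inter> conj_set n (minv n l) (BLm n d)"
  proof (rule Set.set_eqI)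
    fix z
    show "z \<in> Bphi n d \<inter> conj_set n (minv n x) (Iminus n) \<longleftrightarrow> z \<in> Bphi n d \<inter> conj_set n (minv n l) (BLm n d)"
    proof (cases "z \<in> Bphi n d")
      case True
      then obtain C where C: "C \<in> Bphi0 n d" "z = iota n d C" unfolding Bphi_def by auto
      have "C \<in> G0 n d" using C(1) unfolding Bphi0_def by auto
      then show ?thesis using eqA C(2) True by auto
    qed simp
  qed
  have ipw: "ipair n w (iota n d Pwi)" unfolding wd Pw_def[symmetric] by (rule ipair_iota[OF ipP bPw bPwi])
  have ULsub: "ULm n d \<subseteq> carrier_mat n n" unfolding ULm_def by auto
  have yconj: "y \<in> conj_set n (minv n w) (ULm n d) \<longleftrightarrow> w * y * iota n d Pwi \<in> ULm n d"
    if "y \<in> carrier_mat n n" for y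
    by (rule conj_mem) (use ipw ULsub that in \<open>auto simp: ipair_def\<close>)
  have P2: "Bphi n d \<inter> conj_set n (minv n l) (BLm n d)
           = {t * v | t v. t \<in> Tphi n d \<and> v \<in> Uphi n d \<and>
                (minv n t * u * t) * v * minv n u \<in> UL n d \<inter> conj_set n (minv n w) (ULm n d)}"
  proof (rule Set.set_eqI, rule iffI)
    fix z assume z: "z \<in> Bphi n d \<inter> conj_set n (minv n l) (BLm n d)"
    obtain C where C: "C \<in> Bphi0 n d" "z = iota n d C" using z unfolding Bphi_def by auto
    have CG: "C \<in> G0 n d" using C(1) unfolding Bphi0_def by auto
    obtain Ci where Cc: "C \<in> carrier_mat n n" and bC: "blk n d C" and ipC: "ipair n C Ci" using G0_props[OF CG] by blast
    have lC: "lowtri n (MM C)" using eqA[OF CG] z C(2) by auto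
    define f where "f i = C $$ (i,i)" for i
    have fnz: "\<forall>i<n. f i \<noteq> 0" using uptri_diag_nz[OF Bphi0_uptri[OF C(1)] ipC] unfolding f_def by auto
    define V where "V = gdiag n (\<lambda>i. 1 / f i) * C"
    have Vc: "V \<in> carrier_mat n n" unfolding V_def using Cc by (simp add: mcn[of _ n])
    have Ve: "V $$ (i,j) = C $$ (i,j) / f i" if "i < n" "j < n" for i j
      unfolding V_def using that Cc by (simp add: gdiag_left[OF Cc])
    have CB: "\<forall>i<n. \<forall>j<n. ((i < d \<or> j < d) \<longrightarrow> C $$ (i,j) = (if i = j then 1 else 0)) \<and> (j < i \<longrightarrow> C $$ (i,j) = 0)"
      using C(1) unfolding Bphi0_def by auto
    have VB: "V \<in> Bphi0 n d"
    proof -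
      have "blk n d V" unfolding V_def by (rule blk_mult[OF gdiag_carrier Cc blk_gdiag bC])
      moreover have "\<exists>B. ipair n V B" unfolding V_def using ipair_mult[OF ipair_sym[OF gdiag_ipair] ipC] fnz by blast
      ultimately have "V \<in> G0 n d" unfolding G0_def using Vc ipair_invertible[OF Vc] unfolding blk_def by auto
      moreover have "\<forall>i<n. \<forall>j<n. ((i < d \<or> j < d) \<longrightarrow> V $$ (i,j) = (if i = j then 1 else 0)) \<and> (j < i \<longrightarrow> V $$ (i,j) = 0)"
        using CB Ve fnz unfolding f_def by auto
      ultimately show ?thesis unfolding Bphi0_def by blast
    qed
    have V1: "\<forall>i<n. V $$ (i,i) = 1" using Ve fnz unfolding f_def by auto
    have TV: "gdiag n f * V = C" using Vc Cc fnz by (auto simp: gdiag_left[OF Vc] Ve intro!: eq_matI)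
    have TB: "gdiag n f \<in> Bphi0 n d \<and> (\<forall>i<n. \<forall>j<n. i \<noteq> j \<longrightarrow> gdiag n f $$ (i,j) = 0)"
    proof -
      have "\<exists>B. ipair n (gdiag n f) B" using gdiag_ipair fnz by blast
      then have "gdiag n f \<in> G0 n d" unfolding G0_def using ipair_invertible[OF gdiag_carrier, of n f] blk_gdiag[of n d f, unfolded blk_def] by auto
      moreover have "\<forall>i<n. \<forall>j<n. ((i < d \<or> j < d) \<longrightarrow> gdiag n f $$ (i,j) = (if i = j then 1 else 0)) \<and> (j < i \<longrightarrow> gdiag n f $$ (i,j) = 0)"
        using CB unfolding f_def gdiag_def by auto
      ultimately show ?thesis unfolding Bphi0_def gdiag_def by auto
    qed
    have tT: "iota n d (gdiag n f) \<in> Tphi n d" unfolding Tphi_def using TB by blast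
    have vU: "iota n d V \<in> Uphi n d" unfolding Uphi_def using VB V1 by blast
    have zt: "z = iota n d (gdiag n f) * iota n d V" unfolding C(2) iota_mult[OF gdiag_carrier Vc blk_gdiag] TV ..
    note cr = core[OF fnz VB V1]
    let ?Y = "gdiag n (\<lambda>i. 1 / f i) * U * gdiag n f * V * Ui"
    have Yc: "?Y \<in> carrier_mat n n" using Uc Vc Uic by (simp add: mcn[of _ n])
    have yUL: "iota n d ?Y \<in> UL n d" unfolding UL_def using cr by blast
    have lPY: "lowtri n (Pw * ?Y * Pwi)" using cr lC TV by simp
    have "iota n d (Pw * ?Y * Pwi) \<in> ULm n d" unfolding ULm_def
      using cr lPY unfolding lowtri_def by (auto intro!: imageI)
    then have yc: "iota n d ?Y \<in> conj_set n (minv n w) (ULm n d)" using yconj[OF iota_carrier] cr by simp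
    show "z \<in> {t * v | t v. t \<in> Tphi n d \<and> v \<in> Uphi n d \<and>
                (minv n t * u * t) * v * minv n u \<in> UL n d \<inter> conj_set n (minv n w) (ULm n d)}"
    proof -
      have yeq: "minv n (iota n d (gdiag n f)) * u * iota n d (gdiag n f) * iota n d V * minv n u = iota n d ?Y"
        using cr by blast
      have "\<exists>t v. z = t * v \<and> t \<in> Tphi n d \<and> v \<in> Uphi n d \<and>
                (minv n t * u * t) * v * minv n u \<in> UL n d \<inter> conj_set n (minv n w) (ULm n d)"
        by (rule exI[of _ "iota n d (gdiag n f)"], rule exI[of _ "iota n d V"]) (use zt tT vU yUL yc yeq in simp)
      then show ?thesis by blast
    qed
  next
    fix z assume "z \<in> {t * v | t v. t \<in> Tphi n d \<and> v \<in> Uphi n d \<and>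
                (minv n t * u * t) * v * minv n u \<in> UL n d \<inter> conj_set n (minv n w) (ULm n d)}"
    then obtain t v where z: "z = t * v" and tT: "t \<in> Tphi n d" and vU: "v \<in> Uphi n d"
      and yc: "(minv n t * u * t) * v * minv n u \<in> conj_set n (minv n w) (ULm n d)" by blast
    obtain T0 where T0: "t = iota n d T0" "T0 \<in> Bphi0 n d" "\<forall>i<n. \<forall>j<n. i \<noteq> j \<longrightarrow> T0 $$ (i,j) = 0"
      using tT unfolding Tphi_def by blast
    obtain V where V: "v = iota n d V" and VB: "V \<in> Bphi0 n d" and V1: "\<forall>i<n. V $$ (i,i) = 1"
      using vU unfolding Uphi_def by blast
    have T0G: "T0 \<in> G0 n d" using T0(2) unfolding Bphi0_def by auto
    obtain T0i where T0c: "T0 \<in> carrier_mat n n" and ipT0: "ipair n T0 T0i" using G0_props[OF T0G] by blast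
    define f where "f i = T0 $$ (i,i)" for i
    have T0f: "T0 = gdiag n f" using T0c T0(3) unfolding f_def gdiag_def by (auto intro!: eq_matI)
    have fnz: "\<forall>i<n. f i \<noteq> 0" using uptri_diag_nz[OF Bphi0_uptri[OF T0(2)] ipT0] unfolding f_def by auto
    have f1: "f i = 1" if "i < d" "i < n" for i using T0(2) that unfolding Bphi0_def f_def by auto
    have VG: "V \<in> G0 n d" using VB unfolding Bphi0_def by auto
    have Vc: "V \<in> carrier_mat n n" using G0_props[OF VG] by blast
    note cr = core[OF fnz VB V1]
    let ?C = "gdiag n f * V"
    have CG: "?C \<in> G0 n d" using cr by blast
    have VBc: "\<forall>i<n. \<forall>j<n. ((i < d \<or> j < d) \<longrightarrow> V $$ (i,j) = (if i = j then 1 else 0)) \<and> (j < i \<longrightarrow> V $$ (i,j) = 0)"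
      using VB unfolding Bphi0_def by auto
    have CB: "?C \<in> Bphi0 n d"
      unfolding Bphi0_def using CG VBc f1 by (auto simp: gdiag_left[OF Vc])
    have zC: "z = iota n d ?C" unfolding z T0(1) V T0f by (rule iota_mult[OF gdiag_carrier Vc blk_gdiag])
    let ?Y = "gdiag n (\<lambda>i. 1 / f i) * U * gdiag n f * V * Ui"
    have "iota n d ?Y \<in> conj_set n (minv n w) (ULm n d)" using yc cr unfolding T0(1) V T0f by simp
    then have "iota n d (Pw * ?Y * Pwi) \<in> ULm n d" using yconj[OF iota_carrier] cr by simp
    then obtain Z where Z: "iota n d Z = iota n d (Pw * ?Y * Pwi)" "Z \<in> G0 n d"
      "\<forall>i<n. \<forall>j<n. (i = j \<longrightarrow> Z $$ (i,j) = 1) \<and> (i < j \<longrightarrow> Z $$ (i,j) = 0)"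
      unfolding ULm_def by auto
    have "Z = Pw * ?Y * Pwi"
      by (rule iota_inj[OF _ _ _ _ Z(1)]) (use G0_props[OF Z(2)] G0_props[of "Pw * ?Y * Pwi"] cr in auto)
    then have "lowtri n (Pw * ?Y * Pwi)" using Z(3) unfolding lowtri_def by auto
    then have "lowtri n (MM ?C)" using cr by simp
    then have "z \<in> conj_set n (minv n l) (BLm n d)" using eqA[OF CG] zC by simp
    moreover have "z \<in> Bphi n d" unfolding Bphi_def zC using CB by blast
    ultimately show "z \<in> Bphi n d \<inter> conj_set n (minv n l) (BLm n d)" by blast
  qed
  show ?thesis using P1 P2 by blast
qed

end
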